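(* Let $H_0,H_1$ be complex Hilbert spaces, $G$ a densely defined closed operator from $H_0$ into $H_1$ and $D$ a densely defined closed operator from $H_1$ into $H_0$ with $-G^*\subset D$, and assume the inclusion $\mathrm{dom}(G)\subset H_0$ is compact. Let $a,a_1,a_2,\ldots\in\mathcal L(H_1)$ and $\mu>0$ with $\mathrm{Re}\,a_n\ge\mu I$ for all $n$ and $\mathrm{Re}\,a\ge\mu I$. Suppose that $(a_n)$ converges to $a$ independent of the boundary conditions. Then $(\iota^*a_n\iota)^{-1}\to(\iota^*a\iota)^{-1}$ in the weak operator topology on $\mathcal L(\mathrm{ran}(G))$.
   Context: $\mathring G=-D^*$. Domains carry graph inner products, e.g. $(u,v)_{\mathrm{dom}(G)}=(u,v)_{H_0}+(Gu,Gv)_{H_1}$. Under the compactness assumption $\mathrm{ran}(G)$ is closed in $H_1$; it carries the $H_1$-norm, $\iota\colon\mathrm{ran}(G)\hookrightarrow H_1$ is the inclusion and $\iota^*$ the orthogonal projection of $H_1$ onto $\mathrm{ran}(G)$; $\iota^*a\iota$ and $\iota^*a_n\iota$ are invertible on $\mathrm{ran}(G)$. The sequence $(a_n)$ converges to $a$ independent of the boundary conditions if for every strictly increasing $(n_k)$ in $\mathbb N$, all $f,f_k\in H_0$ and all $u,u_k\in\mathrm{dom}(G)$ with $f_k\to f$ weakly in $H_0$, $u_k\to u$ weakly in $\mathrm{dom}(G)$, and $a_{n_k}Gu_k\in\mathrm{dom}(D)$ with $-Da_{n_k}Gu_k=f_k$ for all $k$, it follows that $a_{n_k}Gu_k\to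 aGu$ weakly in $H_1$. *)

theory Defs
  imports "HOL-Analysis.Analysis"
begin

class chilbert = real_normed_vector + complete_space +
  fixes scaleC :: "complex \<Rightarrow> 'a \<Rightarrow> 'a"
    and cinner :: "'a \<Rightarrow> 'a \<Rightarrow> complex"
  assumes scaleC_add_right: "scaleC c (x + y) = scaleC c x + scaleC c y"
    and scaleC_add_left: "scaleC (b + c) x = scaleC b x + scaleC c x"
    and scaleC_scaleC: "scaleC b (scaleC c x) = scaleC (b * c) x"
    and scaleC_one: "scaleC 1 x = x"
    and scaleR_scaleC: "scaleR r x = scaleC (complex_of_real r) x"
    and cinner_conj_sym: "cinner x y = cnj (cinner y x)"
    and cinner_add_left: "cinner (x + y) z = cinner x z + cinner y z"
    and cinner_scaleC_left: "cinner (scaleC c x) y = c * cinner x y"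
    and norm_cinner: "norm x = sqrt (Re (cinner x x))"

section \<open>Unbounded operators, given as (domain, function)\<close>

definition csubspace :: "'a::chilbert set \<Rightarrow> bool" where
  "csubspace S \<longleftrightarrow> 0 \<in> S \<and> (\<forall>x\<in>S. \<forall>y\<in>S. x + y \<in> S) \<and> (\<forall>c. \<forall>x\<in>S. scaleC c x \<in> S)"

definition clinear_on :: "'a::chilbert set \<Rightarrow> ('a \<Rightarrow> 'b::chilbert) \<Rightarrow> bool" where
  "clinear_on S f \<longleftrightarrow> (\<forall>x\<in>S. \<forall>y\<in>S. f (x + y) = f x + f y) \<and>
     (\<forall>c. \<forall>x\<in>S. f (scaleC c x) = scaleC c (f x))"

definition dd_closed_op :: "'a::chilbert set \<Rightarrow> ('a \<Rightarrow> 'b::chilbert) \<Rightarrow> bool" where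
  "dd_closed_op S f \<longleftrightarrow> csubspace S \<and> clinear_on S f \<and> closure S = UNIV \<and>
     closed {(x, f x) | x. x \<in> S}"

definition adj_dom :: "'a::chilbert set \<Rightarrow> ('a \<Rightarrow> 'b::chilbert) \<Rightarrow> 'b set" where
  "adj_dom S f = {v. \<exists>w. \<forall>u\<in>S. cinner (f u) v = cinner u w}"

definition adj :: "'a::chilbert set \<Rightarrow> ('a \<Rightarrow> 'b::chilbert) \<Rightarrow> 'b \<Rightarrow> 'a" where
  "adj S f v = (THE w. \<forall>u\<in>S. cinner (f u) v = cinner u w)"

definition neg_adj_subset ::
  "'a::chilbert set \<Rightarrow> ('a \<Rightarrow> 'b::chilbert) \<Rightarrow> 'b set \<Rightarrow> ('b \<Rightarrow> 'a) \<Rightarrow> bool" where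
  "neg_adj_subset SG G SD D \<longleftrightarrow> adj_dom SG G \<subseteq> SD \<and>
     (\<forall>v\<in>adj_dom SG G. D v = - adj SG G v)"

definition graph_inner :: "('a::chilbert \<Rightarrow> 'b::chilbert) \<Rightarrow> 'a \<Rightarrow> 'a \<Rightarrow> complex" where
  "graph_inner G u v = cinner u v + cinner (G u) (G v)"

definition compact_embedding :: "'a::chilbert set \<Rightarrow> ('a \<Rightarrow> 'b::chilbert) \<Rightarrow> bool" where
  "compact_embedding S G \<longleftrightarrow>
     (\<forall>B\<subseteq>S. (\<exists>M. \<forall>u\<in>B. Re (graph_inner G u u) \<le> M) \<longrightarrow> compact (closure B))"

definition bounded_clinear_op :: "('a::chilbert \<Rightarrow> 'a) \<Rightarrow> bool" where
  "bounded_clinear_op a \<longleftrightarrow> (\<forall>x y. a (x + y) = a x + a y) \<and>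
     (\<forall>c x. a (scaleC c x) = scaleC c (a x)) \<and> (\<exists>K. \<forall>x. norm (a x) \<le> norm x * K)"

definition re_ge :: "('a::chilbert \<Rightarrow> 'a) \<Rightarrow> real \<Rightarrow> bool" where
  "re_ge a \<mu> \<longleftrightarrow> (\<forall>x. Re (cinner (a x) x) \<ge> \<mu> * (norm x)\<^sup>2)"

definition weak_conv :: "(nat \<Rightarrow> 'a::chilbert) \<Rightarrow> 'a \<Rightarrow> bool" where
  "weak_conv x l \<longleftrightarrow> (\<forall>y. (\<lambda>k. cinner (x k) y) \<longlonglongrightarrow> cinner l y)"

definition weak_conv_graph ::
  "'a::chilbert set \<Rightarrow> ('a \<Rightarrow> 'b::chilbert) \<Rightarrow> (nat \<Rightarrow> 'a) \<Rightarrow> 'a \<Rightarrow> bool" where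
  "weak_conv_graph S G x l \<longleftrightarrow> (\<forall>k. x k \<in> S) \<and> l \<in> S \<and>
     (\<forall>v\<in>S. (\<lambda>k. graph_inner G (x k) v) \<longlonglongrightarrow> graph_inner G l v)"

definition cproj :: "'a::chilbert set \<Rightarrow> 'a \<Rightarrow> 'a" where
  "cproj M x = (THE p. p \<in> M \<and> (\<forall>m\<in>M. cinner (x - p) m = 0))"

definition conv_indep_bc ::
  "'a::chilbert set \<Rightarrow> ('a \<Rightarrow> 'b::chilbert) \<Rightarrow> 'b set \<Rightarrow> ('b \<Rightarrow> 'a) \<Rightarrow>
   (nat \<Rightarrow> 'b \<Rightarrow> 'b) \<Rightarrow> ('b \<Rightarrow> 'b) \<Rightarrow> bool" where
  "conv_indep_bc SG G SD D as a \<longleftrightarrow>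
     (\<forall>(n :: nat \<Rightarrow> nat) (f :: 'a) fk u uk.
        strict_mono n \<longrightarrow> weak_conv fk f \<longrightarrow> weak_conv_graph SG G uk u \<longrightarrow>
        (\<forall>k. as (n k) (G (uk k)) \<in> SD \<and> - D (as (n k) (G (uk k))) = fk k) \<longrightarrow>
        weak_conv (\<lambda>k. as (n k) (G (uk k))) (a (G u)))"

text \<open>(\<iota>^* b \<iota>)^{-1} on ran(G) (extended arbitrarily outside ran(G)).\<close>
definition compressed_inv :: "'b::chilbert set \<Rightarrow> ('b \<Rightarrow> 'b) \<Rightarrow> 'b \<Rightarrow> 'b" where
  "compressed_inv R b = inv_into R (\<lambda>z. cproj R (b z))"

definition wot_conv_on :: "'b::chilbert set \<Rightarrow> (nat \<Rightarrow> 'b \<Rightarrow> 'b) \<Rightarrow> ('b \<Rightarrow> 'b) \<Rightarrow> bool" where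
  "wot_conv_on R T L \<longleftrightarrow> (\<forall>x\<in>R. \<forall>y\<in>R. (\<lambda>n. cinner (T n x) y) \<longlonglongrightarrow> cinner (L x) y)"

end

theory Submission
  imports Defs "HOL-Library.Diagonal_Subsequence"
begin
section \<open>Basic algebra of complex Hilbert spaces\<close>


lemma scaleC_zero_right[simp]: "scaleC c 0 = 0"
proof -
  have "scaleC c 0 = scaleC c (0 + 0)" by simp
  also have "\<dots> = scaleC c 0 + scaleC c 0" by (rule scaleC_add_right)
  finally show ?thesis by simp
qed

lemma scaleC_of_real: "scaleC (complex_of_real r) x = scaleR r x"
  by (simp add: scaleR_scaleC)

lemma scaleC_zero_left[simp]: "scaleC 0 x = 0"
  using scaleC_of_real[of 0 x] by simp

lemma scaleC_minus_left: "scaleC (- c) x = - scaleC c x"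
proof -
  have "scaleC (- c) x + scaleC c x = 0" using scaleC_add_left[of "-c" c x] by simp
  thus ?thesis by (simp add: eq_neg_iff_add_eq_0)
qed

lemma scaleC_minus_right: "scaleC c (- x) = - scaleC c x"
proof -
  have "scaleC c (- x) + scaleC c x = 0" using scaleC_add_right[of c "-x" x] by simp
  thus ?thesis by (simp add: eq_neg_iff_add_eq_0)
qed

lemma scaleC_diff_right: "scaleC c (x - y) = scaleC c x - scaleC c y"
  using scaleC_add_right[of c x "-y"] by (simp add: scaleC_minus_right)

lemma scaleC_diff_left: "scaleC (b - c) x = scaleC b x - scaleC c x"
  using scaleC_add_left[of b "-c" x] by (simp add: scaleC_minus_left)

lemma scaleC_scaleR_comm: "scaleC c (scaleR r x) = scaleR r (scaleC c x)"
  by (simp add: scaleR_scaleC scaleC_scaleC mult.commute)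

lemma cinner_add_right: "cinner x (y + z) = cinner x y + cinner x z"
  by (metis cinner_conj_sym cinner_add_left complex_cnj_add)

lemma cinner_scaleC_right: "cinner x (scaleC c y) = cnj c * cinner x y"
  by (metis cinner_conj_sym cinner_scaleC_left complex_cnj_mult)

lemma cinner_zero_left[simp]: "cinner 0 y = 0"
  using cinner_add_left[of 0 0 y] by simp

lemma cinner_zero_right[simp]: "cinner x 0 = 0"
  using cinner_add_right[of x 0 0] by simp

lemma cinner_minus_left: "cinner (- x) y = - cinner x y"
  using cinner_add_left[of x "-x" y] by (simp add: eq_neg_iff_add_eq_0 add.commute)

lemma cinner_minus_right: "cinner x (- y) = - cinner x y"
  using cinner_add_right[of x y "-y"] by (simp add: eq_neg_iff_add_eq_0 add.commute)

lemma cinner_diff_left: "cinner (x - y) z = cinner x z - cinner y z"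
  using cinner_add_left[of x "-y" z] by (simp add: cinner_minus_left)

lemma cinner_diff_right: "cinner x (y - z) = cinner x y - cinner x z"
  using cinner_add_right[of x y "-z"] by (simp add: cinner_minus_right)

lemma cinner_scaleR_left: "cinner (scaleR r x) y = complex_of_real r * cinner x y"
  by (simp add: scaleR_scaleC cinner_scaleC_left)

lemma cinner_scaleR_right: "cinner x (scaleR r y) = complex_of_real r * cinner x y"
  by (simp add: scaleR_scaleC cinner_scaleC_right)

lemma cinner_self: "cinner x x = complex_of_real ((norm x)\<^sup>2)"
proof -
  have "Im (cinner x x) = 0"
    using cinner_conj_sym[of x x] by (metis Reals_cnj_iff complex_is_Real_iff)
  moreover have "Re (cinner x x) \<ge> 0" using norm_cinner[of x] norm_ge_zero[of x] by (metis real_sqrt_ge_0_iff)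
  moreover have "Re (cinner x x) = (norm x)\<^sup>2"
    using norm_cinner[of x] calculation(2) by simp
  ultimately show ?thesis by (simp add: complex_eq_iff)
qed

lemma cinner_self_Re: "Re (cinner x x) = (norm x)\<^sup>2"
  by (simp add: cinner_self)

lemma cinner_self_eq_0[simp]: "cinner x x = 0 \<longleftrightarrow> x = 0"
  by (simp add: cinner_self)

lemma norm_scaleC[simp]: "norm (scaleC c x) = cmod c * norm x"
proof -
  have "(norm (scaleC c x))\<^sup>2 = Re (cinner (scaleC c x) (scaleC c x))" by (simp add: cinner_self_Re)
  also have "cinner (scaleC c x) (scaleC c x) = c * cnj c * cinner x x" by (simp add: cinner_scaleC_left cinner_scaleC_right mult.assoc)
  also have "\<dots> = (cmod c)\<^sup>2 * (norm x)\<^sup>2"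
    by (simp add: cinner_self complex_mult_cnj cmod_power2)
  finally have "(norm (scaleC c x))\<^sup>2 = (cmod c * norm x)\<^sup>2" by (simp add: power_mult_distrib)
  thus ?thesis by (simp add: power2_eq_iff_nonneg)
qed

lemma norm_add_sq: "(norm (x + y))\<^sup>2 = (norm x)\<^sup>2 + (norm y)\<^sup>2 + 2 * Re (cinner x y)"
proof -
  have "(norm (x + y))\<^sup>2 = Re (cinner (x+y) (x+y))" by (simp add: cinner_self_Re)
  also have "\<dots> = Re (cinner x x) + Re (cinner y y) + Re (cinner x y) + Re (cinner y x)"
    by (simp add: cinner_add_left cinner_add_right)
  also have "Re (cinner y x) = Re (cinner x y)" by (subst cinner_conj_sym) simp
  finally show ?thesis by (simp add: cinner_self_Re)
qed

lemma norm_diff_sq: "(norm (x - y))\<^sup>2 = (norm x)\<^sup>2 + (norm y)\<^sup>2 - 2 * Re (cinner x y)"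
  using norm_add_sq[of x "-y"] by (simp add: cinner_minus_right)

lemma Cauchy_Schwarz: "cmod (cinner x y) \<le> norm x * norm y"
proof (cases "y = 0")
  case True thus ?thesis by simp
next
  case False
  define t where "t = cinner x y / complex_of_real ((norm y)\<^sup>2)"
  have ny: "norm y > 0" using False by simp
  have "0 \<le> (norm (x - scaleC t y))\<^sup>2" by simp
  also have "\<dots> = (norm x)\<^sup>2 + (cmod t)\<^sup>2 * (norm y)\<^sup>2 - 2 * Re (cnj t * cinner x y)"
    by (simp add: norm_diff_sq cinner_scaleC_right power_mult_distrib)
  also have "cnj t * cinner x y = complex_of_real ((cmod (cinner x y))\<^sup>2 / (norm y)\<^sup>2)"
    by (simp add: t_def complex_mult_cnj cmod_power2 mult.commute)
  also have "(cmod t)\<^sup>2 * (norm y)\<^sup>2 = (cmod (cinner x y))\<^sup>2 / (norm y)\<^sup>2"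
    using ny by (simp add: t_def norm_divide power_divide norm_power) (simp add: field_simps power2_eq_square eval_nat_numeral)
  finally have "(cmod (cinner x y))\<^sup>2 / (norm y)\<^sup>2 \<le> (norm x)\<^sup>2" by simp
  hence "(cmod (cinner x y))\<^sup>2 \<le> (norm x)\<^sup>2 * (norm y)\<^sup>2" using ny by (simp add: field_simps)
  hence "(cmod (cinner x y))\<^sup>2 \<le> (norm x * norm y)\<^sup>2" by (simp add: power_mult_distrib)
  thus ?thesis by (rule power2_le_imp_le) simp
qed

lemma bounded_bilinear_cinner: "bounded_bilinear cinner"
  apply (rule bounded_bilinear.intro)
  apply (simp_all add: cinner_add_left cinner_add_right cinner_scaleR_left cinner_scaleR_right scaleR_conv_of_real)
  apply (rule exI[of _ 1]) by (simp add: Cauchy_Schwarz)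

lemma bounded_bilinear_scaleC: "bounded_bilinear scaleC"
  apply (rule bounded_bilinear.intro)
  apply (simp_all add: scaleC_add_left scaleC_add_right scaleC_scaleR_comm)
    apply (simp add: scaleR_scaleC scaleC_scaleC scaleR_conv_of_real)
  apply (rule exI[of _ 1]) by simp

lemma tendsto_cinner [tendsto_intros]:
  "(f \<longlongrightarrow> a) F \<Longrightarrow> (g \<longlongrightarrow> b) F \<Longrightarrow> ((\<lambda>x. cinner (f x) (g x)) \<longlongrightarrow> cinner a b) F"
  by (rule bounded_bilinear.tendsto[OF bounded_bilinear_cinner])

lemma tendsto_scaleC [tendsto_intros]:
  "(f \<longlongrightarrow> a) F \<Longrightarrow> (g \<longlongrightarrow> b) F \<Longrightarrow> ((\<lambda>x. scaleC (f x) (g x)) \<longlongrightarrow> scaleC a b) F"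
  by (rule bounded_bilinear.tendsto[OF bounded_bilinear_scaleC])

lemma orth_norm_add: "cinner x y = 0 \<Longrightarrow> (norm (x + y))\<^sup>2 = (norm x)\<^sup>2 + (norm y)\<^sup>2"
  by (simp add: norm_add_sq)

lemma cinner_eq_zero_all: "(\<forall>y. cinner x y = 0) \<Longrightarrow> x = 0"
  using cinner_self_eq_0 by blast

section \<open>Subspaces, projections, Riesz\<close>

lemma csub_add: "csubspace M \<Longrightarrow> x \<in> M \<Longrightarrow> y \<in> M \<Longrightarrow> x + y \<in> M"
  by (simp add: csubspace_def)
lemma csub_scaleC: "csubspace M \<Longrightarrow> x \<in> M \<Longrightarrow> scaleC c x \<in> M"
  by (simp add: csubspace_def)
lemma csub_zero: "csubspace M \<Longrightarrow> 0 \<in> M"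
  by (simp add: csubspace_def)
lemma csub_scaleR: "csubspace M \<Longrightarrow> x \<in> M \<Longrightarrow> scaleR r x \<in> M"
  by (simp add: csubspace_def scaleR_scaleC)
lemma csub_minus: "csubspace M \<Longrightarrow> x \<in> M \<Longrightarrow> - x \<in> M"
  using csub_scaleR[of M x "-1"] by simp
lemma csub_diff: "csubspace M \<Longrightarrow> x \<in> M \<Longrightarrow> y \<in> M \<Longrightarrow> x - y \<in> M"
  using csub_add[of M x "-y"] csub_minus[of M y] by simp

lemma proj_exists:
  fixes M :: "'a::chilbert set"
  assumes sub: "csubspace M" and cl: "closed M"
  shows "\<exists>p\<in>M. \<forall>m\<in>M. cinner (x - p) m = 0"
proof -
  define X where "X = (\<lambda>m. norm (x - m)) ` M"
  define d where "d = Inf X"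
  have Xne: "X \<noteq> {}" using csub_zero[OF sub] by (auto simp: X_def)
  have Xbdd: "bdd_below X" by (auto simp: X_def intro!: bdd_belowI[of _ 0])
  have dle: "d \<le> norm (x - m)" if "m \<in> M" for m
    unfolding d_def using that Xbdd by (auto simp: X_def intro!: cInf_lower)
  have d0: "d \<ge> 0" using dle[OF csub_zero[OF sub]] Xne Xbdd unfolding d_def X_def
    by (auto intro!: cInf_greatest)
  have "\<forall>n::nat. \<exists>m\<in>M. norm (x - m) < d + 1 / real (Suc n)"
  proof
    fix n :: nat
    have "Inf X < d + 1 / real (Suc n)" by (simp add: d_def)
    then obtain t where "t \<in> X" "t < d + 1 / real (Suc n)" using cInf_less_iff[OF Xne Xbdd] by blast
    thus "\<exists>m\<in>M. norm (x - m) < d + 1 / real (Suc n)" by (auto simp: X_def)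
  qed
  then obtain ms where msM: "\<And>n. ms n \<in> M" and msd: "\<And>n. norm (x - ms n) < d + 1 / real (Suc n)"
    by metis
  define e where "e = (\<lambda>n::nat. 1 / real (Suc n))"
  have e01: "0 < e n" "e n \<le> 1" for n by (auto simp: e_def)
  have par: "(norm (ms a - ms b))\<^sup>2 \<le> (4 * d + 2) * (e a + e b)" for a b
  proof -
    define u where "u = x - ms a"
    define v where "v = x - ms b"
    define mid where "mid = scaleR (1/2) (ms a + ms b)"
    have midM: "mid \<in> M" unfolding mid_def by (intro csub_scaleR csub_add sub msM)
    have uv: "u + v = scaleR 2 (x - mid)"
      by (simp add: u_def v_def mid_def scaleR_diff_right scaleR_add_right algebra_simps scaleR_2)
    have "norm (u + v) = 2 * norm (x - mid)" by (simp add: uv)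
    hence n1: "(norm (u + v))\<^sup>2 \<ge> 4 * d\<^sup>2" using dle[OF midM] d0
      by (simp add: power_mult_distrib power_mono)
    have pl: "(norm (u - v))\<^sup>2 + (norm (u + v))\<^sup>2 = 2 * (norm u)\<^sup>2 + 2 * (norm v)\<^sup>2"
      by (simp add: norm_add_sq norm_diff_sq)
    have "u - v = ms b - ms a" by (simp add: u_def v_def)
    hence "norm (ms a - ms b) = norm (u - v)" by (simp add: norm_minus_commute)
    have nu: "norm u \<le> d + e a" using msd[of a] by (simp add: u_def e_def)
    have nv: "norm v \<le> d + e b" using msd[of b] by (simp add: v_def e_def)
    have "(norm u)\<^sup>2 \<le> (d + e a)\<^sup>2" using nu by (simp add: power_mono)
    moreover have "(norm v)\<^sup>2 \<le> (d + e b)\<^sup>2" using nv by (simp add: power_mono)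
    ultimately have "(norm (u - v))\<^sup>2 \<le> 2 * (d + e a)\<^sup>2 + 2 * (d + e b)\<^sup>2 - 4 * d\<^sup>2"
      using pl n1 by linarith
    also have "\<dots> = 4 * d * e a + 2 * (e a)\<^sup>2 + 4 * d * e b + 2 * (e b)\<^sup>2"
      by (simp add: power2_eq_square algebra_simps)
    also have "\<dots> \<le> 4 * d * e a + 2 * e a + 4 * d * e b + 2 * e b"
      using e01[of a] e01[of b] mult_right_le_one_le[of "e a" "e a"] mult_right_le_one_le[of "e b" "e b"]
      unfolding power2_eq_square by linarith
    also have "\<dots> = (4 * d + 2) * (e a + e b)" by (simp add: algebra_simps)
    finally show ?thesis using \<open>norm (ms a - ms b) = norm (u - v)\<close> by simp
  qed
  have "Cauchy ms"
  proof (rule metric_CauchyI)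
    fix eps :: real assume eps: "eps > 0"
    obtain N :: nat where N: "real N > 2 * (4 * d + 2) / eps\<^sup>2" using reals_Archimedean2 by blast
    show "\<exists>N. \<forall>m\<ge>N. \<forall>n\<ge>N. dist (ms m) (ms n) < eps"
    proof (intro exI allI impI)
      fix a b assume a: "a \<ge> N" and b: "b \<ge> N"
      have "e a \<le> 1 / real (Suc N)" "e b \<le> 1 / real (Suc N)" using a b
        by (auto simp: e_def divide_simps)
      hence "(norm (ms a - ms b))\<^sup>2 \<le> (4 * d + 2) * (2 / real (Suc N))"
      proof -
        have "e a + e b \<le> 2 / real (Suc N)" using \<open>e a \<le> 1 / real (Suc N)\<close> \<open>e b \<le> 1 / real (Suc N)\<close>
          by (simp add: field_simps)
        hence "(4 * d + 2) * (e a + e b) \<le> (4 * d + 2) * (2 / real (Suc N))"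
          using d0 by (intro mult_left_mono) auto
        thus ?thesis using par[of a b] by linarith
      qed
      also have "\<dots> < eps\<^sup>2"
      proof -
        have "2 * (4 * d + 2) / eps\<^sup>2 < real (Suc N)" using N by simp
        hence "2 * (4 * d + 2) < eps\<^sup>2 * real (Suc N)" using eps by (simp add: divide_simps mult.commute)
        thus ?thesis by (simp add: divide_simps mult.commute)
      qed
      finally have "(norm (ms a - ms b))\<^sup>2 < eps\<^sup>2" .
      thus "dist (ms a) (ms b) < eps" using eps by (simp add: dist_norm power_less_imp_less_base)
    qed
  qed
  then obtain p where lim: "ms \<longlonglongrightarrow> p" using Cauchy_convergent_iff convergent_def by blast
  have pM: "p \<in> M" using closed_sequentially[OF cl] msM lim by blast
  have pmin: "norm (x - p) \<le> norm (x - m)" if "m \<in> M" for m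
  proof -
    have "(\<lambda>n. norm (x - ms n)) \<longlonglongrightarrow> norm (x - p)" by (intro tendsto_intros lim)
    moreover have "(\<lambda>n. d + e n) \<longlonglongrightarrow> d + 0"
      unfolding e_def by (intro tendsto_intros LIMSEQ_Suc[OF lim_inverse_n'[unfolded inverse_eq_divide]])
    ultimately have "norm (x - p) \<le> d + 0"
      by (rule LIMSEQ_le) (use msd in \<open>auto simp: e_def intro: less_imp_le\<close>)
    thus ?thesis using dle[OF that] by simp
  qed
  show ?thesis
  proof (intro bexI[OF _ pM] ballI)
    fix m assume mM: "m \<in> M"
    define r where "r = x - p"
    define c where "c = cinner r m"
    show "cinner (x - p) m = 0"
    proof (rule ccontr)
      assume "cinner (x - p) m \<noteq> 0"
      hence c0: "c \<noteq> 0" by (simp add: c_def r_def)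
      define s where "s = 1 / ((norm m)\<^sup>2 + 1)"
      have s0: "s > 0" unfolding s_def by (smt (verit) divide_pos_pos zero_le_power2)
      have "p + scaleC (complex_of_real s * c) m \<in> M" by (intro csub_add csub_scaleC sub pM mM)
      from pmin[OF this] have "norm r \<le> norm (r - scaleC (complex_of_real s * c) m)"
        by (simp add: r_def algebra_simps)
      hence "(norm r)\<^sup>2 \<le> (norm (r - scaleC (complex_of_real s * c) m))\<^sup>2"
        by (simp add: power_mono)
      also have "\<dots> = (norm r)\<^sup>2 + (s * cmod c * norm m)\<^sup>2 - 2 * Re (cnj (complex_of_real s * c) * c)"
        by (simp add: norm_diff_sq cinner_scaleC_right c_def norm_mult abs_of_pos[OF s0])
      also have "cnj (complex_of_real s * c) * c = complex_of_real (s * (cmod c)\<^sup>2)"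
        by (simp add: complex_mult_cnj cmod_power2 mult.commute)
      finally have "2 * (s * (cmod c)\<^sup>2) \<le> s\<^sup>2 * (cmod c)\<^sup>2 * (norm m)\<^sup>2"
        by (simp add: power_mult_distrib)
      hence "2 * (s * (cmod c)\<^sup>2) \<le> (s * (cmod c)\<^sup>2) * (s * (norm m)\<^sup>2)"
        by (simp add: power2_eq_square algebra_simps)
      moreover have "s * (cmod c)\<^sup>2 > 0" using s0 c0 by simp
      ultimately have "2 \<le> s * (norm m)\<^sup>2"
        using mult_le_cancel_left_pos[of "s*(cmod c)\<^sup>2" 2 "s*(norm m)\<^sup>2"] by (simp add: mult.commute)
      moreover have "s * (norm m)\<^sup>2 < 1"
      proof -
        have pos: "(norm m)\<^sup>2 + 1 > 0" using zero_le_power2[of "norm m"] by linarith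
        thus ?thesis unfolding s_def by (simp add: divide_simps)
      qed
      ultimately show False by simp
    qed
  qed
qed

lemma proj_unique:
  fixes M :: "'a::chilbert set"
  assumes sub: "csubspace M" and "p \<in> M" "q \<in> M"
    and "\<forall>m\<in>M. cinner (x - p) m = 0" "\<forall>m\<in>M. cinner (x - q) m = 0"
  shows "p = q"
proof -
  have pq: "p - q \<in> M" using assms by (simp add: csub_diff)
  have "cinner (x - q) (p - q) - cinner (x - p) (p - q) = 0" using assms pq by simp
  hence "cinner (p - q) (p - q) = 0" by (simp add: cinner_diff_left[symmetric] algebra_simps)
  thus ?thesis by simp
qed

lemma cproj:
  fixes M :: "'a::chilbert set"
  assumes "csubspace M" "closed M"
  shows "cproj M x \<in> M" "\<And>m. m \<in> M \<Longrightarrow> cinner (x - cproj M x) m = 0"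
proof -
  have ex1: "\<exists>!p. p \<in> M \<and> (\<forall>m\<in>M. cinner (x - p) m = 0)"
    using proj_exists[OF assms, of x] proj_unique[OF assms(1)] by blast
  have "cproj M x \<in> M \<and> (\<forall>m\<in>M. cinner (x - cproj M x) m = 0)"
    unfolding cproj_def by (rule theI'[OF ex1])
  thus "cproj M x \<in> M" "\<And>m. m \<in> M \<Longrightarrow> cinner (x - cproj M x) m = 0" by auto
qed

lemma cproj_eqI:
  fixes M :: "'a::chilbert set"
  assumes "csubspace M" "closed M" "p \<in> M" "\<forall>m\<in>M. cinner (x - p) m = 0"
  shows "cproj M x = p"
  using proj_unique[OF assms(1) cproj(1)[OF assms(1,2)] assms(3) _ assms(4)] cproj[OF assms(1,2)]
  by blast

lemma cinner_orth_sym: "cinner x y = 0 \<Longrightarrow> cinner y x = 0"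
  by (metis cinner_conj_sym complex_cnj_zero)

lemma riesz:
  fixes M :: "'a::chilbert set" and f :: "'a \<Rightarrow> complex"
  assumes sub: "csubspace M" and cl: "closed M"
    and add: "\<And>x y. x \<in> M \<Longrightarrow> y \<in> M \<Longrightarrow> f (x + y) = f x + f y"
    and hom: "\<And>c x. x \<in> M \<Longrightarrow> f (scaleC c x) = c * f x"
    and bnd: "\<And>x. x \<in> M \<Longrightarrow> cmod (f x) \<le> K * norm x"
  shows "\<exists>w\<in>M. \<forall>m\<in>M. f m = cinner m w"
proof (cases "\<forall>m\<in>M. f m = 0")
  case True thus ?thesis using csub_zero[OF sub] by (auto intro!: bexI[of _ 0])
next
  case False
  then obtain m0 where m0: "m0 \<in> M" "f m0 \<noteq> 0" by auto
  define N where "N = {m\<in>M. f m = 0}"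
  have fdiff: "f (x - y) = f x - f y" if "x \<in> M" "y \<in> M" for x y
    using add[of "x - y" y] that csub_diff[OF sub that] by simp
  have subN: "csubspace N" unfolding N_def csubspace_def
    using csub_zero[OF sub] hom[of 0 0] add csub_add[OF sub] csub_scaleC[OF sub] hom
    by auto
  have clN: "closed N"
    unfolding closed_sequential_limits
  proof (intro allI impI, elim conjE)
    fix xs l assume xN: "\<forall>n. xs n \<in> N" and lim: "xs \<longlonglongrightarrow> l"
    have lM: "l \<in> M" using closed_sequentially[OF cl] xN lim by (auto simp: N_def)
    have "(\<lambda>n. K * norm (xs n - l)) \<longlonglongrightarrow> K * norm (l - l)" by (intro tendsto_intros lim)
    hence t: "(\<lambda>n. K * norm (xs n - l)) \<longlonglongrightarrow> 0" by simp
    have "cmod (f l) \<le> K * norm (xs n - l)" for n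
    proof -
      have "f (xs n - l) = - f l" using fdiff[of "xs n" l] xN lM by (auto simp: N_def)
      thus ?thesis using bnd[of "xs n - l"] csub_diff[OF sub, of "xs n" l] xN lM by (auto simp: N_def)
    qed
    hence "cmod (f l) \<le> 0" using t by (intro LIMSEQ_le_const[OF t]) auto
    thus "l \<in> N" using lM by (simp add: N_def)
  qed
  define q where "q = m0 - cproj N m0"
  have PN: "cproj N m0 \<in> N" by (rule cproj(1)[OF subN clN])
  have qM: "q \<in> M" using PN m0 by (auto simp: q_def N_def intro: csub_diff[OF sub])
  have fq: "f q = f m0" using fdiff[of m0 "cproj N m0"] PN m0 by (simp add: q_def N_def)
  have qorth: "cinner n q = 0" if "n \<in> N" for n
    using cproj(2)[OF subN clN that, of m0] by (simp add: q_def cinner_orth_sym)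
  have q0: "q \<noteq> 0" using fq m0 hom[of m0 0] by (auto)
  define w where "w = scaleC (cnj (f q) / complex_of_real ((norm q)\<^sup>2)) q"
  show ?thesis
  proof (intro bexI[of _ w] ballI)
    show "w \<in> M" unfolding w_def by (rule csub_scaleC[OF sub qM])
    fix m assume mM: "m \<in> M"
    define z where "z = scaleC (f m) q - scaleC (f q) m"
    have zM: "z \<in> M" unfolding z_def by (intro csub_diff csub_scaleC sub qM mM)
    have "f z = f m * f q - f q * f m" unfolding z_def
      using fdiff hom qM mM csub_scaleC[OF sub] by simp
    hence "z \<in> N" using zM by (simp add: N_def)
    hence "cinner z q = 0" by (rule qorth)
    hence eq: "f m * complex_of_real ((norm q)\<^sup>2) = f q * cinner m q"
      by (simp add: z_def cinner_diff_left cinner_scaleC_left cinner_self)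
    have nq: "complex_of_real ((norm q)\<^sup>2) \<noteq> 0" using q0 by simp
    show "f m = cinner m w"
      unfolding w_def cinner_scaleC_right using eq nq by (simp add: field_simps)
  qed
qed

section \<open>Weak sequential compactness\<close>

lemma csubspace_UNIV: "csubspace (UNIV :: 'a::chilbert set)"
  by (simp add: csubspace_def)

lemma weak_conv_subseq:
  "weak_conv x w \<Longrightarrow> strict_mono r \<Longrightarrow> weak_conv (x \<circ> r) w"
  unfolding weak_conv_def using LIMSEQ_subseq_LIMSEQ by (fastforce simp: o_def)

lemma tri3:
  fixes a b :: "'a::real_normed_vector"
  shows "norm (a - b) \<le> norm (a - a') + norm (a' - b') + norm (b - b')"
proof -
  have eq: "a - b = ((a - a') + (a' - b')) - (b - b')" by simp
  have "norm (a - b) \<le> norm ((a - a') + (a' - b')) + norm (b - b')"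
    by (subst eq) (rule norm_triangle_ineq4)
  also have "\<dots> \<le> norm (a - a') + norm (a' - b') + norm (b - b')"
    using norm_triangle_ineq[of "a - a'" "a' - b'"] by simp
  finally show ?thesis .
qed

lemma weak_compact:
  fixes x :: "nat \<Rightarrow> 'a::chilbert"
  assumes bnd: "\<And>n. norm (x n) \<le> B"
  shows "\<exists>r w. strict_mono r \<and> weak_conv (x \<circ> r) w"
proof -
  define P where "P = (\<lambda>j (s::nat\<Rightarrow>nat). convergent (\<lambda>k. cinner (x (s k)) (x j)))"
  interpret S: subseqs P
  proof
    fix j and s :: "nat \<Rightarrow> nat" assume "strict_mono s"
    have "bounded (range (\<lambda>k. cinner (x (s k)) (x j)))"
      unfolding bounded_iff
    proof (intro exI ballI)
      fix z assume "z \<in> range (\<lambda>k. cinner (x (s k)) (x j))"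
      then obtain k where z: "z = cinner (x (s k)) (x j)" by auto
      have "cmod z \<le> norm (x (s k)) * norm (x j)" using z Cauchy_Schwarz by simp
      also have "\<dots> \<le> B * norm (x j)" by (intro mult_right_mono bnd) simp
      finally show "cmod z \<le> B * norm (x j)" .
    qed
    from bounded_imp_convergent_subsequence[OF this]
    obtain l r where "strict_mono r" "((\<lambda>k. cinner (x (s k)) (x j)) \<circ> r) \<longlonglongrightarrow> l" by blast
    thus "\<exists>r'. strict_mono r' \<and> P j (s \<circ> r')"
      unfolding P_def convergent_def by (auto simp: o_def)
  qed
  define r where "r = S.diagseq"
  have r: "strict_mono r" unfolding r_def by (rule S.subseq_diagseq)
  have convj: "convergent (\<lambda>k. cinner (x (r k)) (x j))" for j
  proof -
    have "P j (S.diagseq \<circ> (+) (Suc j))"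
      by (rule S.diagseq_holds) (auto simp: P_def o_def intro: convergent_subseq_convergent[unfolded o_def])
    hence "convergent (\<lambda>k. cinner (x (r (k + Suc j))) (x j))"
      by (simp add: P_def r_def o_def add.commute)
    thus ?thesis by (rule convergent_ignore_initial_segment[THEN iffD1])
  qed
  define L where "L = {y. convergent (\<lambda>k. cinner (x (r k)) y)}"
  have subL: "csubspace L"
    unfolding csubspace_def L_def
    by (auto simp: cinner_add_right cinner_scaleC_right convergent_const
        intro: convergent_add convergent_mult[OF convergent_const])
  have clL: "closed L"
    unfolding closed_sequential_limits
  proof (intro allI impI, elim conjE)
    fix ys y assume yL: "\<forall>n. ys n \<in> L" and lim: "ys \<longlonglongrightarrow> y"
    show "y \<in> L" unfolding L_def mem_Collect_eq Cauchy_convergent_iff[symmetric]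
    proof (rule metric_CauchyI)
      fix e :: real assume e: "e > 0"
      define B' where "B' = \<bar>B\<bar> + 1"
      have B': "B' > 0" "\<And>n. norm (x n) \<le> B'" using bnd abs_ge_self[of B] by (auto simp: B'_def intro: order_trans) (smt (verit) bnd abs_ge_self)
      have "\<exists>m. norm (ys m - y) < e / (3 * B')"
        using lim e B' unfolding LIMSEQ_iff by (metis diff_zero divide_pos_pos le_refl zero_less_mult_iff zero_less_numeral)
      then obtain m where m: "norm (ys m - y) < e / (3 * B')" by blast
      have "Cauchy (\<lambda>k. cinner (x (r k)) (ys m))"
        using yL by (simp add: L_def Cauchy_convergent_iff)
      then obtain N where N: "\<And>a b. a \<ge> N \<Longrightarrow> b \<ge> N \<Longrightarrow>
          dist (cinner (x (r a)) (ys m)) (cinner (x (r b)) (ys m)) < e / 3"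
        using e unfolding Cauchy_def by (meson divide_pos_pos zero_less_numeral)
      have small: "cmod (cinner (x k) y - cinner (x k) (ys m)) < e / 3" for k
      proof -
        have "cmod (cinner (x k) y - cinner (x k) (ys m)) = cmod (cinner (x k) (y - ys m))"
          by (simp add: cinner_diff_right)
        also have "\<dots> \<le> norm (x k) * norm (y - ys m)" by (rule Cauchy_Schwarz)
        also have "\<dots> \<le> B' * norm (ys m - y)" using B' by (intro mult_mono B') (auto simp: norm_minus_commute)
        also have "\<dots> < B' * (e / (3 * B'))" using m B' by (intro mult_strict_left_mono) auto
        also have "\<dots> = e / 3" using B' by simp
        finally show ?thesis .
      qed
      show "\<exists>N. \<forall>a\<ge>N. \<forall>b\<ge>N. dist (cinner (x (r a)) y) (cinner (x (r b)) y) < e"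
      proof (intro exI allI impI)
        fix a b assume a: "a \<ge> N" and b: "b \<ge> N"
        have "dist (cinner (x (r a)) y) (cinner (x (r b)) y) \<le>
          cmod (cinner (x (r a)) y - cinner (x (r a)) (ys m)) +
          dist (cinner (x (r a)) (ys m)) (cinner (x (r b)) (ys m)) +
          cmod (cinner (x (r b)) y - cinner (x (r b)) (ys m))"
          unfolding dist_norm by (rule tri3)
        also have "\<dots> < e / 3 + e / 3 + e / 3" using small N[OF a b] by (intro add_strict_mono) auto
        finally show "dist (cinner (x (r a)) y) (cinner (x (r b)) y) < e" by simp
      qed
    qed
  qed
  have allL: "y \<in> L" for y
  proof -
    have p: "cproj L y \<in> L" by (rule cproj(1)[OF subL clL])
    have xL: "x j \<in> L" for j using convj by (simp add: L_def)
    have "cinner (x j) (y - cproj L y) = 0" for j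
      using cproj(2)[OF subL clL xL] by (simp add: cinner_orth_sym)
    hence "y - cproj L y \<in> L" by (simp add: L_def convergent_const)
    from csub_add[OF subL this p] show ?thesis by simp
  qed
  define F where "F = (\<lambda>y. lim (\<lambda>k. cinner (x (r k)) y))"
  have Flim: "(\<lambda>k. cinner (x (r k)) y) \<longlonglongrightarrow> F y" for y
    using allL[of y] by (simp add: L_def F_def convergent_LIMSEQ_iff)
  have "\<exists>w\<in>UNIV. \<forall>m\<in>UNIV. cnj (F m) = cinner m w"
  proof (rule riesz[OF csubspace_UNIV closed_UNIV, of "\<lambda>y. cnj (F y)" "\<bar>B\<bar>"])
    fix y z
    have "(\<lambda>k. cinner (x (r k)) (y + z)) \<longlonglongrightarrow> F y + F z"
      unfolding cinner_add_right by (intro tendsto_intros Flim)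
    hence "F (y + z) = F y + F z" using Flim LIMSEQ_unique by blast
    thus "cnj (F (y + z)) = cnj (F y) + cnj (F z)" by simp
  next
    fix c y
    have "(\<lambda>k. cinner (x (r k)) (scaleC c y)) \<longlonglongrightarrow> cnj c * F y"
      unfolding cinner_scaleC_right by (intro tendsto_intros Flim)
    hence "F (scaleC c y) = cnj c * F y" using Flim LIMSEQ_unique by blast
    thus "cnj (F (scaleC c y)) = c * cnj (F y)" by simp
  next
    fix y
    have "(\<lambda>k. cmod (cinner (x (r k)) y)) \<longlonglongrightarrow> cmod (F y)" by (intro tendsto_intros Flim)
    moreover have "cmod (cinner (x (r k)) y) \<le> \<bar>B\<bar> * norm y" for k
      using Cauchy_Schwarz[of "x (r k)" y] bnd[of "r k"]
      by (smt (verit, best) mult_right_mono norm_ge_zero)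
    ultimately have "cmod (F y) \<le> \<bar>B\<bar> * norm y" by (intro LIMSEQ_le_const2) auto
    thus "cmod (cnj (F y)) \<le> \<bar>B\<bar> * norm y" by simp
  qed
  then obtain w where w: "\<And>m. cnj (F m) = cinner m w" by auto
  have "weak_conv (x \<circ> r) w"
    unfolding weak_conv_def
  proof
    fix y
    have "F y = cinner w y" using w[of y] by (metis cinner_conj_sym complex_cnj_cnj)
    thus "(\<lambda>k. cinner ((x \<circ> r) k) y) \<longlonglongrightarrow> cinner w y" using Flim[of y] by (simp add: o_def)
  qed
  with r show ?thesis by blast
qed

section \<open>Products of Hilbert spaces\<close>

instantiation prod :: (chilbert, chilbert) chilbert
begin
definition scaleC_prod_def: "scaleC c p = (scaleC c (fst p), scaleC c (snd p))"
definition cinner_prod_def: "cinner p q = cinner (fst p) (fst q) + cinner (snd p) (snd q)"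
instance
proof
  fix c b :: complex and x y z :: "'a \<times> 'b" and r :: real
  show "scaleC c (x + y) = scaleC c x + scaleC c y"
    by (simp add: scaleC_prod_def scaleC_add_right)
  show "scaleC (b + c) x = scaleC b x + scaleC c x"
    by (simp add: scaleC_prod_def scaleC_add_left)
  show "scaleC b (scaleC c x) = scaleC (b * c) x"
    by (simp add: scaleC_prod_def scaleC_scaleC)
  show "scaleC 1 x = x"
    by (simp add: scaleC_prod_def scaleC_one)
  show "scaleR r x = scaleC (complex_of_real r) x"
    by (simp add: scaleC_prod_def scaleR_scaleC prod_eq_iff)
  show "cinner x y = cnj (cinner y x)"
    by (simp add: cinner_prod_def) (metis cinner_conj_sym)
  show "cinner (x + y) z = cinner x z + cinner y z"
    by (simp add: cinner_prod_def cinner_add_left)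
  show "cinner (scaleC c x) y = c * cinner x y"
    by (simp add: cinner_prod_def scaleC_prod_def cinner_scaleC_left algebra_simps)
  show "norm x = sqrt (Re (cinner x x))"
    by (simp add: cinner_prod_def norm_prod_def cinner_self_Re)
qed
end

lemma cinner_prod: "cinner (a, b) (c, d) = cinner a c + cinner b d"
  by (simp add: cinner_prod_def)

lemma weak_limit_in_closed_sub:
  fixes M :: "'a::chilbert set"
  assumes sub: "csubspace M" and cl: "closed M" and xM: "\<And>n. x n \<in> M" and wc: "weak_conv x w"
  shows "w \<in> M"
proof -
  define d where "d = w - cproj M w"
  have pM: "cproj M w \<in> M" by (rule cproj(1)[OF sub cl])
  have orth: "cinner m d = 0" if "m \<in> M" for m
    using cproj(2)[OF sub cl that, of w] by (simp add: d_def cinner_orth_sym)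
  have "(\<lambda>n. cinner (x n) d) \<longlonglongrightarrow> cinner w d" using wc by (simp add: weak_conv_def)
  moreover have "(\<lambda>n. cinner (x n) d) = (\<lambda>n. 0)" using orth xM by auto
  ultimately have "cinner w d = 0" using LIMSEQ_unique tendsto_const by metis
  moreover have "cinner (cproj M w) d = 0" by (rule orth[OF pM])
  ultimately have "cinner d d = 0" by (simp add: d_def cinner_diff_left)
  hence "d = 0" by simp
  thus ?thesis using pM by (simp add: d_def)
qed

section \<open>Projection properties and compressions\<close>

lemma cproj_add:
  fixes R :: "'a::chilbert set"
  assumes sub: "csubspace R" and cl: "closed R"
  shows "cproj R (x + y) = cproj R x + cproj R y"
proof (rule cproj_eqI[OF sub cl])
  show "cproj R x + cproj R y \<in> R" by (intro csub_add[OF sub] cproj(1)[OF sub cl])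
  show "\<forall>m\<in>R. cinner (x + y - (cproj R x + cproj R y)) m = 0"
  proof
    fix m assume m: "m \<in> R"
    have eq: "x + y - (cproj R x + cproj R y) = (x - cproj R x) + (y - cproj R y)" by simp
    show "cinner (x + y - (cproj R x + cproj R y)) m = 0"
      using cproj(2)[OF sub cl m, of x] cproj(2)[OF sub cl m, of y] unfolding eq cinner_add_left by simp
  qed
qed

lemma cproj_scaleC:
  fixes R :: "'a::chilbert set"
  assumes sub: "csubspace R" and cl: "closed R"
  shows "cproj R (scaleC c x) = scaleC c (cproj R x)"
proof (rule cproj_eqI[OF sub cl])
  show "scaleC c (cproj R x) \<in> R" by (intro csub_scaleC[OF sub] cproj(1)[OF sub cl])
  show "\<forall>m\<in>R. cinner (scaleC c x - scaleC c (cproj R x)) m = 0"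
    using cproj(2)[OF sub cl] by (simp add: scaleC_diff_right[symmetric] cinner_scaleC_left)
qed

lemma cproj_diff:
  fixes R :: "'a::chilbert set"
  assumes sub: "csubspace R" and cl: "closed R"
  shows "cproj R (x - y) = cproj R x - cproj R y"
proof -
  have "cproj R x = cproj R ((x - y) + y)" by simp
  also have "\<dots> = cproj R (x - y) + cproj R y" by (rule cproj_add[OF sub cl])
  finally show ?thesis by simp
qed

lemma cproj_norm:
  fixes R :: "'a::chilbert set"
  assumes sub: "csubspace R" and cl: "closed R"
  shows "norm (cproj R x) \<le> norm x"
proof -
  have "cinner (cproj R x) (x - cproj R x) = 0"
    using cproj(2)[OF sub cl cproj(1)[OF sub cl, of x], of x] by (rule cinner_orth_sym)
  hence "(norm (cproj R x + (x - cproj R x)))\<^sup>2 = (norm (cproj R x))\<^sup>2 + (norm (x - cproj R x))\<^sup>2"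
    by (rule orth_norm_add)
  hence "(norm x)\<^sup>2 = (norm (cproj R x))\<^sup>2 + (norm (x - cproj R x))\<^sup>2" by simp
  hence "(norm (cproj R x))\<^sup>2 \<le> (norm x)\<^sup>2" by (simp only:) (rule le_add_same_cancel1[THEN iffD2], simp)
  thus ?thesis by (rule power2_le_imp_le) simp
qed

lemma cproj_id: "csubspace R \<Longrightarrow> closed R \<Longrightarrow> x \<in> R \<Longrightarrow> cproj R x = x"
  by (rule cproj_eqI) simp_all

lemma cinner_cproj_left:
  fixes R :: "'a::chilbert set"
  assumes sub: "csubspace R" and cl: "closed R" and "z \<in> R"
  shows "cinner (cproj R x) z = cinner x z"
  using cproj(2)[OF sub cl assms(3), of x] by (simp add: cinner_diff_left)

lemma bclin:
  assumes "bounded_clinear_op b"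
  shows "b (x + y) = b x + b y" "b (scaleC c x) = scaleC c (b x)" "b (x - y) = b x - b y"
    "\<exists>K>0. \<forall>x. norm (b x) \<le> norm x * K"
proof -
  show a: "b (x + y) = b x + b y" using assms by (simp add: bounded_clinear_op_def)
  show "b (scaleC c x) = scaleC c (b x)" using assms by (simp add: bounded_clinear_op_def)
  show "b (x - y) = b x - b y"
  proof -
    have "b x = b ((x - y) + y)" by simp
    also have "\<dots> = b (x - y) + b y" using assms unfolding bounded_clinear_op_def by blast
    finally show ?thesis by simp
  qed
  obtain K where K: "\<forall>x. norm (b x) \<le> norm x * K" using assms by (auto simp: bounded_clinear_op_def)
  show "\<exists>K>0. \<forall>x. norm (b x) \<le> norm x * K"
  proof (intro exI[of _ "\<bar>K\<bar> + 1"] conjI allI)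
    fix x show "norm (b x) \<le> norm x * (\<bar>K\<bar> + 1)"
      using K[rule_format, of x] by (smt (verit) mult_left_mono norm_ge_zero)
  qed simp
qed

locale compression =
  fixes R :: "'a::chilbert set" and b :: "'a \<Rightarrow> 'a" and \<mu> :: real
  assumes sub: "csubspace R" and cl: "closed R" and bl: "bounded_clinear_op b"
    and mu: "\<mu> > 0" and co: "re_ge b \<mu>"
begin

definition c where "c z = cproj R (b z)"

lemma cR: "c z \<in> R" by (simp add: c_def cproj(1)[OF sub cl])

lemma c_inner: "z \<in> R \<Longrightarrow> cinner (c z) z = cinner (b z) z"
  by (simp add: c_def cinner_cproj_left[OF sub cl])

lemma c_diff: "c (x - y) = c x - c y"
  by (simp add: c_def bclin(3)[OF bl] cproj_diff[OF sub cl])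

lemma c_add: "c (x + y) = c x + c y"
  by (simp add: c_def bclin(1)[OF bl] cproj_add[OF sub cl])

lemma c_scaleC: "c (scaleC a x) = scaleC a (c x)"
  by (simp add: c_def bclin(2)[OF bl] cproj_scaleC[OF sub cl])

lemma c_lower: "z \<in> R \<Longrightarrow> \<mu> * norm z \<le> norm (c z)"
proof -
  assume z: "z \<in> R"
  have "\<mu> * (norm z)\<^sup>2 \<le> Re (cinner (b z) z)" using co by (simp add: re_ge_def)
  also have "\<dots> = Re (cinner (c z) z)" using c_inner[OF z] by simp
  also have "\<dots> \<le> cmod (cinner (c z) z)" by (rule complex_Re_le_cmod)
  also have "\<dots> \<le> norm (c z) * norm z" by (rule Cauchy_Schwarz)
  finally have "\<mu> * norm z * norm z \<le> norm (c z) * norm z" by (simp add: power2_eq_square mult.assoc)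
  thus ?thesis by (cases "norm z = 0") (auto simp: mult_le_cancel_right)
qed

lemma c_inj: "inj_on c R"
proof (rule inj_onI)
  fix x y assume x: "x \<in> R" and y: "y \<in> R" and eq: "c x = c y"
  have "x - y \<in> R" using x y by (rule csub_diff[OF sub])
  from c_lower[OF this] have "\<mu> * norm (x - y) \<le> 0" using eq by (simp add: c_diff)
  thus "x = y" using mu by (simp add: mult_le_0_iff)
qed

lemma c_cont: "\<exists>K>0. \<forall>x. norm (c x) \<le> norm x * K"
proof -
  obtain K where "K > 0" "\<forall>x. norm (b x) \<le> norm x * K" using bclin(4)[OF bl] by blast
  thus ?thesis using cproj_norm[OF sub cl] unfolding c_def by (meson order_trans)
qed

lemma c_surj: "c ` R = R"
proof -
  define Q where "Q = c ` R"
  have QR: "Q \<subseteq> R" using cR by (auto simp: Q_def)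
  have subQ: "csubspace Q" unfolding csubspace_def Q_def
  proof (intro conjI ballI allI)
    have "c 0 = 0" using c_diff[of 0 0] by simp
    thus "0 \<in> c ` R" by (intro rev_image_eqI[of 0]) (simp_all add: csub_zero[OF sub])
  next
    fix x y assume "x \<in> c ` R" "y \<in> c ` R"
    then obtain x' y' where "x' \<in> R" "y' \<in> R" "x = c x'" "y = c y'" by auto
    thus "x + y \<in> c ` R" by (intro rev_image_eqI[of "x' + y'"]) (simp_all add: c_add csub_add[OF sub])
  next
    fix a x assume "x \<in> c ` R"
    then obtain x' where "x' \<in> R" "x = c x'" by auto
    thus "scaleC a x \<in> c ` R" by (intro rev_image_eqI[of "scaleC a x'"]) (simp_all add: c_scaleC csub_scaleC[OF sub])
  qed
  have clQ: "closed Q"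
    unfolding closed_sequential_limits
  proof (intro allI impI, elim conjE)
    fix ys y assume yQ: "\<forall>n. ys n \<in> Q" and lim: "ys \<longlonglongrightarrow> y"
    have "\<forall>n. \<exists>z. z \<in> R \<and> ys n = c z" using yQ by (auto simp: Q_def)
    then obtain zs where zz: "\<forall>n. zs n \<in> R \<and> ys n = c (zs n)" by metis
    have zR: "\<And>n. zs n \<in> R" and zs: "\<And>n. ys n = c (zs n)" using zz by auto
    have "Cauchy zs"
    proof (rule metric_CauchyI)
      fix e :: real assume e: "e > 0"
      have "Cauchy ys" using lim by (rule LIMSEQ_imp_Cauchy)
      then obtain N where N: "\<And>m n. m \<ge> N \<Longrightarrow> n \<ge> N \<Longrightarrow> dist (ys m) (ys n) < \<mu> * e"
        using e mu unfolding Cauchy_def by (meson mult_pos_pos)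
      show "\<exists>N. \<forall>m\<ge>N. \<forall>n\<ge>N. dist (zs m) (zs n) < e"
      proof (intro exI allI impI)
        fix m n assume "m \<ge> N" "n \<ge> N"
        have "\<mu> * norm (zs m - zs n) \<le> norm (c (zs m - zs n))"
          by (rule c_lower[OF csub_diff[OF sub zR zR]])
        also have "\<dots> = dist (ys m) (ys n)" by (simp add: c_diff zs dist_norm)
        also have "\<dots> < \<mu> * e" using N \<open>m \<ge> N\<close> \<open>n \<ge> N\<close> by blast
        finally show "dist (zs m) (zs n) < e" using mu by (simp add: dist_norm)
      qed
    qed
    then obtain z where zlim: "zs \<longlonglongrightarrow> z" using Cauchy_convergent_iff convergent_def by blast
    have zR': "z \<in> R" using closed_sequentially[OF cl] zR zlim by blast
    obtain K where K: "K > 0" "\<And>x. norm (c x) \<le> norm x * K" using c_cont by blast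
    have "(\<lambda>n. zs n - z) \<longlonglongrightarrow> 0" using zlim by (simp add: LIM_zero_iff)
    hence "(\<lambda>n. norm (zs n - z)) \<longlonglongrightarrow> 0" by (rule tendsto_norm_zero)
    hence t0: "(\<lambda>n. norm (zs n - z) * K) \<longlonglongrightarrow> 0" by (rule tendsto_mult_left_zero)
    have "(\<lambda>n. c (zs n) - c z) \<longlonglongrightarrow> 0"
    proof (rule Lim_null_comparison[OF _ t0])
      show "\<forall>\<^sub>F n in sequentially. norm (c (zs n) - c z) \<le> norm (zs n - z) * K"
        using K(2) by (simp add: c_diff[symmetric])
    qed
    hence cl2: "(\<lambda>n. c (zs n)) \<longlonglongrightarrow> c z" by (simp add: LIM_zero_iff)
    have "ys = (\<lambda>n. c (zs n))" using zs by auto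
    hence "(\<lambda>n. c (zs n)) \<longlonglongrightarrow> y" using lim by simp
    hence "y = c z" using cl2 LIMSEQ_unique by blast
    thus "y \<in> Q" using zR' by (simp add: Q_def)
  qed
  show ?thesis
  proof
    show "c ` R \<subseteq> R" using QR by (simp add: Q_def)
    show "R \<subseteq> c ` R"
    proof
      fix x assume xR: "x \<in> R"
      define p where "p = cproj Q x"
      have pQ: "p \<in> Q" unfolding p_def by (rule cproj(1)[OF subQ clQ])
      have dR: "x - p \<in> R" using xR pQ QR csub_diff[OF sub] by blast
      have "c (x - p) \<in> Q" using dR by (simp add: Q_def)
      hence "cinner (x - p) (c (x - p)) = 0" using cproj(2)[OF subQ clQ] by (simp add: p_def)
      hence "cinner (c (x - p)) (x - p) = 0" by (rule cinner_orth_sym)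
      hence "Re (cinner (b (x - p)) (x - p)) = 0" using c_inner[OF dR] by simp
      moreover have "\<mu> * (norm (x - p))\<^sup>2 \<le> Re (cinner (b (x - p)) (x - p))"
        using co by (simp add: re_ge_def)
      ultimately have "\<mu> * (norm (x - p))\<^sup>2 \<le> 0" by simp
      hence "x = p" using mu by (simp add: mult_le_0_iff)
      thus "x \<in> c ` R" using pQ by (simp add: Q_def)
    qed
  qed
qed

definition T where "T = compressed_inv R b"

lemma T_eq: "T = inv_into R c"
  by (simp add: T_def compressed_inv_def c_def[abs_def])

lemma T_R: "x \<in> R \<Longrightarrow> T x \<in> R"
  unfolding T_eq using c_surj by (metis inv_into_into)

lemma c_T: "x \<in> R \<Longrightarrow> c (T x) = x"
  unfolding T_eq using c_surj by (metis f_inv_into_f)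

lemma T_c: "z \<in> R \<Longrightarrow> T (c z) = z"
  unfolding T_eq using c_inj by (rule inv_into_f_f)

lemma T_char: "z \<in> R \<Longrightarrow> x \<in> R \<Longrightarrow> (\<forall>r\<in>R. cinner (b z - x) r = 0) \<Longrightarrow> T x = z"
proof -
  assume z: "z \<in> R" and x: "x \<in> R" and o: "\<forall>r\<in>R. cinner (b z - x) r = 0"
  have "c z = x" unfolding c_def by (rule cproj_eqI[OF sub cl x o])
  thus ?thesis using T_c[OF z] by simp
qed

lemma T_bound: "x \<in> R \<Longrightarrow> \<mu> * norm (T x) \<le> norm x"
  using c_lower[OF T_R] c_T by metis

lemma T_diff: "x \<in> R \<Longrightarrow> y \<in> R \<Longrightarrow> T (x - y) = T x - T y"
proof -
  assume x: "x \<in> R" and y: "y \<in> R"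
  have "T x - T y \<in> R" using T_R x y csub_diff[OF sub] by blast
  moreover have "c (T x - T y) = x - y" by (simp add: c_diff c_T x y)
  ultimately show ?thesis using T_c by metis
qed

lemma T_orth: "x \<in> R \<Longrightarrow> r \<in> R \<Longrightarrow> cinner (b (T x) - x) r = 0"
  using cproj(2)[OF sub cl, of r "b (T x)"] c_T unfolding c_def by metis

end

section \<open>Closed range from the compact embedding\<close>

lemma graph_mem: "(a, b) \<in> {(x, f x) | x. x \<in> S} \<longleftrightarrow> a \<in> S \<and> b = f a"
  by auto

lemma clin_diff:
  assumes "csubspace S" "clinear_on S G" "u \<in> S" "w \<in> S"
  shows "G (u - w) = G u - G w"
proof -
  have uw: "u - w \<in> S" using assms by (simp add: csub_diff)
  have "G u = G ((u - w) + w)" by simp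
  also have "\<dots> = G (u - w) + G w" using assms(2) uw assms(4) unfolding clinear_on_def by blast
  finally show ?thesis by simp
qed

lemma clin_scaleC:
  "clinear_on S G \<Longrightarrow> u \<in> S \<Longrightarrow> G (scaleC c u) = scaleC c (G u)"
  by (simp add: clinear_on_def)

lemma clin_zero:
  assumes "csubspace S" "clinear_on S G"
  shows "G 0 = 0"
  using clin_diff[OF assms csub_zero[OF assms(1)] csub_zero[OF assms(1)]] by simp

lemma graph_limit:
  assumes cl: "closed {(x, G x) | x. x \<in> S}" and uS: "\<And>n. u n \<in> S"
    and l1: "u \<longlonglongrightarrow> a" and l2: "(\<lambda>n. G (u n)) \<longlonglongrightarrow> b"
  shows "a \<in> S \<and> G a = b"
proof -
  have h2: "(\<lambda>n. (u n, G (u n))) \<longlonglongrightarrow> (a, b)" by (intro tendsto_Pair l1 l2)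
  have h1: "\<And>n. (u n, G (u n)) \<in> {(x, G x) | x. x \<in> S}" using uS by auto
  have "(a, b) \<in> {(x, G x) | x. x \<in> S}" by (rule closed_sequentially[OF cl h1 h2])
  thus ?thesis by auto
qed

locale closed_dd =
  fixes SG :: "'a::chilbert set" and G :: "'a \<Rightarrow> 'b::chilbert"
  assumes dd: "dd_closed_op SG G"
begin

lemma subG: "csubspace SG" and linG: "clinear_on SG G" and denseG: "closure SG = UNIV"
  and clG: "closed {(x, G x) | x. x \<in> SG}"
  using dd by (auto simp: dd_closed_op_def)

definition K where "K = {u \<in> SG. G u = 0}"

lemma subK: "csubspace K"
proof -
  have "0 \<in> K" using csub_zero[OF subG] clin_zero[OF subG linG] by (simp add: K_def)
  moreover have "x + y \<in> K" if "x \<in> K" "y \<in> K" for x y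
  proof -
    have "G (x + y) = G x + G y" using linG that unfolding clinear_on_def K_def by blast
    thus ?thesis using that csub_add[OF subG] by (simp add: K_def)
  qed
  moreover have "scaleC c x \<in> K" if "x \<in> K" for c x
  proof -
    have "G (scaleC c x) = scaleC c (G x)" using linG that unfolding clinear_on_def K_def by blast
    thus ?thesis using that csub_scaleC[OF subG] by (simp add: K_def)
  qed
  ultimately show ?thesis unfolding csubspace_def by blast
qed

lemma clK: "closed K"
  unfolding closed_sequential_limits
proof (intro allI impI, elim conjE)
  fix us l assume uK: "\<forall>n. us n \<in> K" and lim: "us \<longlonglongrightarrow> l"
  have "(\<lambda>n. G (us n)) \<longlonglongrightarrow> 0" using uK by (simp add: K_def)
  from graph_limit[OF clG _ lim this] uK show "l \<in> K" by (auto simp: K_def)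
qed

lemma KSG: "K \<subseteq> SG" by (auto simp: K_def)

definition perp where "perp u = u - cproj K u"

lemma perp_SG: "u \<in> SG \<Longrightarrow> perp u \<in> SG"
  unfolding perp_def using cproj(1)[OF subK clK] KSG by (auto intro: csub_diff[OF subG])

lemma perp_G: "u \<in> SG \<Longrightarrow> G (perp u) = G u"
  unfolding perp_def using cproj(1)[OF subK clK, of u] KSG
  by (subst clin_diff[OF subG linG]) (auto simp: K_def)

lemma perp_orth: "k \<in> K \<Longrightarrow> cinner (perp u) k = 0"
  unfolding perp_def by (rule cproj(2)[OF subK clK])

lemma poincare:
  assumes ce: "compact_embedding SG G"
  shows "\<exists>C>0. \<forall>v\<in>SG. (\<forall>k\<in>K. cinner v k = 0) \<longrightarrow> norm v \<le> C * norm (G v)"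
proof (rule ccontr)
  assume "\<not> ?thesis"
  hence h: "\<forall>C>0. \<exists>v\<in>SG. (\<forall>k\<in>K. cinner v k = 0) \<and> \<not> norm v \<le> C * norm (G v)" by blast
  have "\<forall>n::nat. \<exists>v. v \<in> SG \<and> (\<forall>k\<in>K. cinner v k = 0) \<and> norm v > real (Suc n) * norm (G v)"
  proof
    fix n :: nat
    have "real (Suc n) > 0" by simp
    from h[rule_format, OF this] show "\<exists>v. v \<in> SG \<and> (\<forall>k\<in>K. cinner v k = 0) \<and> norm v > real (Suc n) * norm (G v)"
      by (auto simp: not_le)
  qed
  from choice[OF this] obtain vs where vsa: "\<forall>n. vs n \<in> SG \<and> (\<forall>k\<in>K. cinner (vs n) k = 0) \<and> norm (vs n) > real (Suc n) * norm (G (vs n))"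
    by blast
  have vs: "\<And>n. vs n \<in> SG" "\<And>n k. k \<in> K \<Longrightarrow> cinner (vs n) k = 0"
    "\<And>n. norm (vs n) > real (Suc n) * norm (G (vs n))" using vsa by auto
  have vs0: "norm (vs n) > 0" for n
  proof -
    have "real (Suc n) * norm (G (vs n)) \<ge> 0" by simp
    thus ?thesis using vs(3)[of n] by linarith
  qed
  define ws where "ws n = scaleC (complex_of_real (1 / norm (vs n))) (vs n)" for n
  have wsSG: "ws n \<in> SG" for n unfolding ws_def by (intro csub_scaleC[OF subG] vs)
  have wsn: "norm (ws n) = 1" for n using vs0[of n] by (simp add: ws_def norm_divide)
  have wsorth: "cinner (ws n) k = 0" if "k \<in> K" for n k
    using vs(2)[OF that] by (simp add: ws_def cinner_scaleC_left)
  have Gws: "norm (G (ws n)) < 1 / real (Suc n)" for n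
  proof -
    have "G (ws n) = scaleC (complex_of_real (1 / norm (vs n))) (G (vs n))"
      unfolding ws_def by (rule clin_scaleC[OF linG vs(1)])
    hence "norm (G (ws n)) = norm (G (vs n)) / norm (vs n)" using vs0[of n] by (simp add: norm_divide)
    also have "\<dots> < 1 / real (Suc n)" using vs(3)[of n] vs0[of n]
      by (simp add: divide_simps mult.commute)
    finally show ?thesis .
  qed
  have "compact (closure (range ws))"
    using ce unfolding compact_embedding_def
  proof (elim allE impE)
    show "range ws \<subseteq> SG" using wsSG by auto
    show "\<exists>M. \<forall>u\<in>range ws. Re (graph_inner G u u) \<le> M"
    proof (intro exI[of _ 2] ballI)
      fix u assume "u \<in> range ws"
      then obtain n where u: "u = ws n" by auto
      have "1 / real (Suc n) \<le> 1" by simp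
      hence "norm (G u) \<le> 1" unfolding u using Gws[of n] by linarith
      hence "(norm (G u))\<^sup>2 \<le> 1" by (simp add: power_le_one)
      thus "Re (graph_inner G u u) \<le> 2" using wsn[of n] u by (simp add: graph_inner_def cinner_self_Re)
    qed
  qed
  from compact_imp_seq_compact[OF this] obtain l r where
    lr: "strict_mono r" "(ws \<circ> r) \<longlonglongrightarrow> l"
    by (rule seq_compactE) (auto intro: closure_subset[THEN subsetD])
  have G0: "(\<lambda>n. G (ws (r n))) \<longlonglongrightarrow> 0"
  proof -
    have "(\<lambda>n. 1 / real (Suc n)) \<longlonglongrightarrow> 0" by (rule LIMSEQ_Suc[OF lim_inverse_n'])
    hence t: "(\<lambda>n. 1 / real (Suc (r n))) \<longlonglongrightarrow> 0" using LIMSEQ_subseq_LIMSEQ[OF _ lr(1)] by (auto simp: o_def)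
    have b: "\<forall>n. norm (G (ws (r n))) \<le> 1 / real (Suc (r n))" proof
      fix n show "norm (G (ws (r n))) \<le> 1 / real (Suc (r n))" using Gws[of "r n"] by linarith
    qed
    show "(\<lambda>n. G (ws (r n))) \<longlonglongrightarrow> 0"
      by (rule Lim_null_comparison[OF always_eventually[OF b] t])
  qed
  have "l \<in> SG \<and> G l = 0" using graph_limit[OF clG wsSG lr(2)[unfolded o_def] G0] .
  hence lK: "l \<in> K" by (simp add: K_def)
  have "(\<lambda>n. cinner (ws (r n)) l) \<longlonglongrightarrow> cinner l l"
    using lr(2) by (intro tendsto_intros) (simp_all add: o_def)
  moreover have "(\<lambda>n. cinner (ws (r n)) l) = (\<lambda>n. 0)" using wsorth[OF lK] by auto
  ultimately have "(\<lambda>n. 0) \<longlonglongrightarrow> cinner l l" by simp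
  hence "cinner l l = 0" by (simp add: LIMSEQ_const_iff)
  hence "l = 0" by simp
  moreover have "(\<lambda>n. norm (ws (r n))) \<longlonglongrightarrow> norm l"
    using lr(2) by (intro tendsto_intros) (simp_all add: o_def)
  hence "(\<lambda>n. 1) \<longlonglongrightarrow> norm l" using wsn by simp
  hence "norm l = 1" by (simp add: LIMSEQ_const_iff)
  ultimately show False by simp
qed

lemma closed_range_and_bound:
  assumes ce: "compact_embedding SG G"
  shows "closed (G ` SG)" "\<exists>C>0. \<forall>y\<in>G ` SG. \<exists>u\<in>SG. G u = y \<and> norm u \<le> C * norm y"
proof -
  obtain C where C: "C > 0" "\<And>v. v \<in> SG \<Longrightarrow> (\<forall>k\<in>K. cinner v k = 0) \<Longrightarrow> norm v \<le> C * norm (G v)"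
    using poincare[OF ce] by blast
  have Cp: "norm (perp u) \<le> C * norm (G u)" if "u \<in> SG" for u
    using C(2)[OF perp_SG[OF that]] perp_orth perp_G[OF that] by auto
  show "\<exists>C>0. \<forall>y\<in>G ` SG. \<exists>u\<in>SG. G u = y \<and> norm u \<le> C * norm y"
    using C(1) Cp perp_SG perp_G by blast
  show "closed (G ` SG)"
    unfolding closed_sequential_limits
  proof (intro allI impI, elim conjE)
    fix ys y assume yR: "\<forall>n. ys n \<in> G ` SG" and lim: "ys \<longlonglongrightarrow> y"
    have "\<forall>n. \<exists>u. u \<in> SG \<and> ys n = G u" using yR by auto
    then obtain us where uu: "\<forall>n. us n \<in> SG \<and> ys n = G (us n)" by metis
    define vs where "vs n = perp (us n)" for n
    have vSG: "vs n \<in> SG" for n unfolding vs_def using uu by (intro perp_SG) auto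
    have vG: "G (vs n) = ys n" for n unfolding vs_def using uu perp_G by auto
    have vo: "cinner (vs n) k = 0" if "k \<in> K" for n k using perp_orth[OF that] by (simp add: vs_def)
    have "Cauchy vs"
    proof (rule metric_CauchyI)
      fix e :: real assume e: "e > 0"
      have "Cauchy ys" using lim by (rule LIMSEQ_imp_Cauchy)
      then obtain N where N: "\<And>m n. m \<ge> N \<Longrightarrow> n \<ge> N \<Longrightarrow> dist (ys m) (ys n) < e / C"
        using e C(1) unfolding Cauchy_def by (meson divide_pos_pos)
      show "\<exists>N. \<forall>m\<ge>N. \<forall>n\<ge>N. dist (vs m) (vs n) < e"
      proof (intro exI allI impI)
        fix m n assume mn: "m \<ge> N" "n \<ge> N"
        have d: "vs m - vs n \<in> SG" by (rule csub_diff[OF subG vSG vSG])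
        have "\<forall>k\<in>K. cinner (vs m - vs n) k = 0" using vo by (simp add: cinner_diff_left)
        hence "norm (vs m - vs n) \<le> C * norm (G (vs m - vs n))" using C(2)[OF d] by blast
        also have "G (vs m - vs n) = ys m - ys n" using clin_diff[OF subG linG vSG vSG] vG by simp
        also have "C * norm (ys m - ys n) < C * (e / C)"
          using N[OF mn] C(1) by (intro mult_strict_left_mono) (auto simp: dist_norm)
        also have "\<dots> = e" using C(1) by simp
        finally show "dist (vs m) (vs n) < e" by (simp add: dist_norm)
      qed
    qed
    then obtain v where vlim: "vs \<longlonglongrightarrow> v" using Cauchy_convergent_iff convergent_def by blast
    have "(\<lambda>n. G (vs n)) \<longlonglongrightarrow> y" using lim vG by simp
    from graph_limit[OF clG vSG vlim this] show "y \<in> G ` SG" by auto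
  qed
qed

end

section \<open>Adjoints and density\<close>

lemma closure_csubspace:
  fixes M :: "'a::chilbert set"
  assumes sub: "csubspace M"
  shows "csubspace (closure M)"
  unfolding csubspace_def
proof (intro conjI ballI allI)
  show "0 \<in> closure M" using csub_zero[OF sub] closure_subset by blast
next
  fix x y assume x: "x \<in> closure M" and y: "y \<in> closure M"
  obtain xs where xs: "\<forall>n. xs n \<in> M" "xs \<longlonglongrightarrow> x" using x unfolding closure_sequential by blast
  obtain ys where ys: "\<forall>n. ys n \<in> M" "ys \<longlonglongrightarrow> y" using y unfolding closure_sequential by blast
  have "\<forall>n. xs n + ys n \<in> M" using xs ys csub_add[OF sub] by blast
  moreover have "(\<lambda>n. xs n + ys n) \<longlonglongrightarrow> x + y" by (intro tendsto_intros xs ys)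
  ultimately show "x + y \<in> closure M" unfolding closure_sequential
    by (intro exI[of _ "\<lambda>n. xs n + ys n"] conjI) auto
next
  fix c x assume x: "x \<in> closure M"
  obtain xs where xs: "\<forall>n. xs n \<in> M" "xs \<longlonglongrightarrow> x" using x unfolding closure_sequential by blast
  have "\<forall>n. scaleC c (xs n) \<in> M" using xs csub_scaleC[OF sub] by blast
  moreover have "(\<lambda>n. scaleC c (xs n)) \<longlonglongrightarrow> scaleC c x" by (intro tendsto_intros xs)
  ultimately show "scaleC c x \<in> closure M" unfolding closure_sequential
    by (intro exI[of _ "\<lambda>n. scaleC c (xs n)"] conjI) auto
qed

lemma csub_inter: "csubspace A \<Longrightarrow> csubspace B \<Longrightarrow> csubspace (A \<inter> B)"
  by (simp add: csubspace_def)

context closed_dd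
begin

lemma dense_zero:
  assumes "\<forall>u\<in>SG. cinner u d = 0"
  shows "d = 0"
proof -
  have "closed {u. cinner u d = 0}"
    by (intro closed_Collect_eq continuous_intros) (auto intro: continuous_on_id
        bounded_linear.continuous_on[OF bounded_bilinear.bounded_linear_left[OF bounded_bilinear_cinner]])
  moreover have "SG \<subseteq> {u. cinner u d = 0}" using assms by auto
  ultimately have "closure SG \<subseteq> {u. cinner u d = 0}" by (intro closure_minimal)
  hence "d \<in> {u. cinner u d = 0}" using denseG by blast
  hence "cinner d d = 0" by simp
  thus ?thesis by simp
qed

lemma adj_unique:
  assumes "\<forall>u\<in>SG. cinner u w1 = cinner u w2"
  shows "w1 = w2"
proof -
  have "\<forall>u\<in>SG. cinner u (w1 - w2) = 0" using assms by (simp add: cinner_diff_right)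
  from dense_zero[OF this] show ?thesis by simp
qed

lemma adj_prop:
  assumes "v \<in> adj_dom SG G"
  shows "\<forall>u\<in>SG. cinner (G u) v = cinner u (adj SG G v)"
proof -
  obtain w where w: "\<forall>u\<in>SG. cinner (G u) v = cinner u w" using assms by (auto simp: adj_dom_def)
  have "\<exists>!w. \<forall>u\<in>SG. cinner (G u) v = cinner u w"
  proof (rule ex1I[of _ w])
    show "\<forall>u\<in>SG. cinner (G u) v = cinner u w" by (rule w)
    fix w' assume "\<forall>u\<in>SG. cinner (G u) v = cinner u w'"
    with w have "\<forall>u\<in>SG. cinner u w' = cinner u w" by simp
    thus "w' = w" by (rule adj_unique)
  qed
  thus ?thesis unfolding adj_def by (rule theI')
qed

lemma adj_orth:
  assumes "\<forall>u\<in>SG. cinner (G u) w = 0"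
  shows "w \<in> adj_dom SG G" "adj SG G w = 0"
proof -
  show wd: "w \<in> adj_dom SG G" using assms by (auto simp: adj_dom_def intro!: exI[of _ 0])
  have "\<forall>u\<in>SG. cinner u (adj SG G w) = cinner u 0" using adj_prop[OF wd] assms by simp
  thus "adj SG G w = 0" by (rule adj_unique)
qed

lemma adj_dom_sub: "csubspace (adj_dom SG G)"
  unfolding csubspace_def
proof (intro conjI ballI allI)
  show "0 \<in> adj_dom SG G" by (auto simp: adj_dom_def intro!: exI[of _ 0])
next
  fix x y assume x: "x \<in> adj_dom SG G" and y: "y \<in> adj_dom SG G"
  show "x + y \<in> adj_dom SG G" unfolding adj_dom_def
    using adj_prop[OF x] adj_prop[OF y] by (auto simp: cinner_add_right intro!: exI[of _ "adj SG G x + adj SG G y"])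
next
  fix c x assume x: "x \<in> adj_dom SG G"
  show "scaleC c x \<in> adj_dom SG G" unfolding adj_dom_def
    using adj_prop[OF x] by (auto simp: cinner_scaleC_right intro!: exI[of _ "scaleC c (adj SG G x)"])
qed

definition Gam where "Gam = {(x, G x) | x. x \<in> SG}"

lemma Gam_sub: "csubspace Gam"
  unfolding csubspace_def Gam_def
proof (intro conjI ballI allI)
  show "0 \<in> {(x, G x) |x. x \<in> SG}"
    using csub_zero[OF subG] clin_zero[OF subG linG] by (auto simp: zero_prod_def)
next
  fix p q assume "p \<in> {(x, G x) |x. x \<in> SG}" "q \<in> {(x, G x) |x. x \<in> SG}"
  then obtain x y where "x \<in> SG" "y \<in> SG" "p = (x, G x)" "q = (y, G y)" by auto
  moreover have "G (x + y) = G x + G y" using linG calculation unfolding clinear_on_def by blast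
  ultimately show "p + q \<in> {(x, G x) |x. x \<in> SG}" using csub_add[OF subG] by auto
next
  fix c p assume "p \<in> {(x, G x) |x. x \<in> SG}"
  then obtain x where "x \<in> SG" "p = (x, G x)" by auto
  moreover have "G (scaleC c x) = scaleC c (G x)" using linG calculation unfolding clinear_on_def by blast
  ultimately show "scaleC c p \<in> {(x, G x) |x. x \<in> SG}" using csub_scaleC[OF subG]
    by (auto simp: scaleC_prod_def)
qed

lemma graph_riesz:
  "\<exists>u\<in>SG. \<forall>phi\<in>SG. cinner phi v = cinner phi u + cinner (G phi) (G u)"
proof -
  have "\<exists>w\<in>Gam. \<forall>m\<in>Gam. cinner (fst m) v = cinner m w"
  proof (rule riesz[OF Gam_sub clG[folded Gam_def], of "\<lambda>p. cinner (fst p) v" "norm v"])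
    fix x y :: "'a \<times> 'b"
    show "cinner (fst (x + y)) v = cinner (fst x) v + cinner (fst y) v" by (simp add: cinner_add_left)
  next
    fix c and x :: "'a \<times> 'b"
    show "cinner (fst (scaleC c x)) v = c * cinner (fst x) v" by (simp add: scaleC_prod_def cinner_scaleC_left)
  next
    fix x :: "'a \<times> 'b"
    have "cmod (cinner (fst x) v) \<le> norm (fst x) * norm v" by (rule Cauchy_Schwarz)
    also have "\<dots> \<le> norm x * norm v" using norm_fst_le[of "fst x" "snd x"] by (intro mult_right_mono) simp_all
    finally show "cmod (cinner (fst x) v) \<le> norm v * norm x" by (simp add: mult.commute)
  qed
  then obtain w where w: "w \<in> Gam" "\<forall>m\<in>Gam. cinner (fst m) v = cinner m w" by blast
  then obtain u where u: "u \<in> SG" "w = (u, G u)" by (auto simp: Gam_def)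
  show ?thesis
  proof (intro bexI[OF _ u(1)] ballI)
    fix phi assume phi: "phi \<in> SG"
    have "(phi, G phi) \<in> Gam" using phi by (auto simp: Gam_def)
    from w(2)[rule_format, OF this] show "cinner phi v = cinner phi u + cinner (G phi) (G u)"
      by (simp add: u(2) cinner_prod)
  qed
qed

lemma orth_dense_zero:
  assumes vS: "v \<in> SG" and o: "\<forall>n\<in>G ` SG \<inter> adj_dom SG G. cinner (G v) n = 0"
  shows "G v = 0"
proof -
  obtain u where u: "u \<in> SG" "\<forall>phi\<in>SG. cinner phi v = cinner phi u + cinner (G phi) (G u)"
    using graph_riesz by blast
  have Gud: "G u \<in> adj_dom SG G" unfolding adj_dom_def
  proof (intro CollectI exI[of _ "v - u"] ballI)
    fix phi assume "phi \<in> SG"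
    from u(2)[rule_format, OF this] show "cinner (G phi) (G u) = cinner phi (v - u)"
      by (simp add: cinner_diff_right)
  qed
  have o1: "cinner (G v) (G u) = 0" using o Gud u(1) by auto
  have e1: "cinner v v = cinner v u" using u(2)[rule_format, OF vS] o1 by simp
  have e2: "cinner u v = cinner u u + cinner (G u) (G u)" using u(2)[rule_format, OF u(1)] .
  have "cinner (v - u) (v - u) = cinner v v - cinner v u - cinner u v + cinner u u"
    by (simp add: cinner_diff_left cinner_diff_right)
  also have "\<dots> = - cinner (G u) (G u)" using e1 e2 by simp
  finally have "Re (cinner (v - u) (v - u)) = Re (- cinner (G u) (G u))" by simp
  hence "(norm (v - u))\<^sup>2 + (norm (G u))\<^sup>2 = 0" by (simp add: cinner_self_Re)
  hence "norm (v - u) = 0" "norm (G u) = 0" by (simp_all add: sum_power2_eq_zero_iff)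
  hence "v = u" by simp
  thus ?thesis using o1 by simp
qed

lemma density:
  assumes ce: "compact_embedding SG G" and xR: "x \<in> G ` SG" and e: "e > 0"
  shows "\<exists>x'\<in>G ` SG \<inter> adj_dom SG G. norm (x - x') < e"
proof -
  define R where "R = G ` SG"
  have subR: "csubspace R"
  proof -
    have "csubspace (G ` SG)" unfolding csubspace_def
    proof (intro conjI ballI allI)
      show "0 \<in> G ` SG" using csub_zero[OF subG] clin_zero[OF subG linG] by (intro rev_image_eqI[of 0]) simp_all
    next
      fix x y assume "x \<in> G ` SG" "y \<in> G ` SG"
      then obtain x' y' where "x' \<in> SG" "y' \<in> SG" "x = G x'" "y = G y'" by auto
      moreover have "G (x' + y') = G x' + G y'" using linG calculation unfolding clinear_on_def by blast
      ultimately show "x + y \<in> G ` SG" using csub_add[OF subG] by (intro rev_image_eqI[of "x' + y'"]) simp_all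
    next
      fix c x assume "x \<in> G ` SG"
      then obtain x' where "x' \<in> SG" "x = G x'" by auto
      moreover have "G (scaleC c x') = scaleC c (G x')" using linG calculation unfolding clinear_on_def by blast
      ultimately show "scaleC c x \<in> G ` SG" using csub_scaleC[OF subG] by (intro rev_image_eqI[of "scaleC c x'"]) simp_all
    qed
    thus ?thesis by (simp add: R_def)
  qed
  have clR: "closed R" unfolding R_def by (rule closed_range_and_bound(1)[OF ce])
  define N where "N = closure (R \<inter> adj_dom SG G)"
  have subN: "csubspace N" unfolding N_def by (intro closure_csubspace csub_inter subR adj_dom_sub)
  have clN: "closed N" by (simp add: N_def)
  have NR: "N \<subseteq> R" unfolding N_def using clR by (simp add: closure_minimal)
  define y where "y = x - cproj N x"
  have "cproj N x \<in> R" by (rule subsetD[OF NR cproj(1)[OF subN clN]])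
  moreover have "x \<in> R" using xR by (simp add: R_def)
  ultimately have yR: "y \<in> R" unfolding y_def by (intro csub_diff[OF subR])
  then obtain v where v: "v \<in> SG" "y = G v" unfolding R_def by blast
  have "\<forall>n\<in>G ` SG \<inter> adj_dom SG G. cinner (G v) n = 0"
  proof
    fix n assume "n \<in> G ` SG \<inter> adj_dom SG G"
    hence "n \<in> N" unfolding N_def R_def by (rule closure_subset[THEN subsetD])
    from cproj(2)[OF subN clN this, of x] show "cinner (G v) n = 0" by (simp add: v(2)[symmetric] y_def)
  qed
  from orth_dense_zero[OF v(1) this] have "y = 0" by (simp add: v)
  hence xN: "x \<in> N" using cproj(1)[OF subN clN, of x] by (simp add: y_def)
  hence "\<exists>x'\<in>R \<inter> adj_dom SG G. dist x' x < e" using e unfolding N_def closure_approachable by blast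
  then obtain x' where x': "x' \<in> G ` SG \<inter> adj_dom SG G" "dist x' x < e" unfolding R_def by blast
  have "norm (x - x') < e" using x'(2) by (simp add: dist_norm norm_minus_commute)
  thus ?thesis using x'(1) by blast
qed

end

lemma subseq_principle:
  fixes s :: "nat \<Rightarrow> 'a::metric_space"
  assumes sub: "\<And>r::nat\<Rightarrow>nat. strict_mono r \<Longrightarrow> \<exists>r'::nat\<Rightarrow>nat. strict_mono r' \<and> (\<lambda>k. s (r (r' k))) \<longlonglongrightarrow> L"
  shows "s \<longlonglongrightarrow> L"
proof (rule ccontr)
  assume "\<not> s \<longlonglongrightarrow> L"
  hence "\<not> (\<forall>e>0. eventually (\<lambda>n. dist (s n) L < e) sequentially)" by (simp add: tendsto_iff)
  then obtain e where e: "e > 0" and ne: "\<not> eventually (\<lambda>n. dist (s n) L < e) sequentially"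
    by blast
  define S where "S = {n. dist (s n) L \<ge> e}"
  have "\<forall>m. \<exists>n\<ge>m. n \<in> S"
  proof
    fix m
    have "\<not> (\<forall>n\<ge>m. dist (s n) L < e)" using ne unfolding eventually_sequentially by blast
    then obtain n where "n \<ge> m" "\<not> dist (s n) L < e" by blast
    thus "\<exists>n\<ge>m. n \<in> S" by (auto simp: S_def not_less)
  qed
  hence "infinite S" by (simp add: infinite_nat_iff_unbounded_le)
  from infinite_enumerate[OF this] obtain r :: "nat \<Rightarrow> nat" where r: "strict_mono r" "\<forall>n. r n \<in> S" by blast
  obtain r' :: "nat \<Rightarrow> nat" where r': "strict_mono r'" "(\<lambda>k. s (r (r' k))) \<longlonglongrightarrow> L" using sub[OF r(1)] by blast
  have "eventually (\<lambda>k. dist (s (r (r' k))) L < e) sequentially" by (rule tendstoD[OF r'(2) e])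
  then obtain N where "\<And>k. k \<ge> N \<Longrightarrow> dist (s (r (r' k))) L < e" unfolding eventually_sequentially by blast
  hence "dist (s (r (r' N))) L < e" by simp
  moreover have "r (r' N) \<in> S" using r(2) by blast
  ultimately show False by (simp add: S_def)
qed

context closed_dd
begin

lemma subR: "csubspace (G ` SG)"
  unfolding csubspace_def
proof (intro conjI ballI allI)
  show "0 \<in> G ` SG" using csub_zero[OF subG] clin_zero[OF subG linG] by (intro rev_image_eqI[of 0]) simp_all
next
  fix x y assume "x \<in> G ` SG" "y \<in> G ` SG"
  then obtain x' y' where "x' \<in> SG" "y' \<in> SG" "x = G x'" "y = G y'" by auto
  moreover have "G (x' + y') = G x' + G y'" using linG calculation unfolding clinear_on_def by blast
  ultimately show "x + y \<in> G ` SG" using csub_add[OF subG] by (intro rev_image_eqI[of "x' + y'"]) simp_all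
next
  fix c x assume "x \<in> G ` SG"
  then obtain x' where "x' \<in> SG" "x = G x'" by auto
  moreover have "G (scaleC c x') = scaleC c (G x')" using linG calculation unfolding clinear_on_def by blast
  ultimately show "scaleC c x \<in> G ` SG" using csub_scaleC[OF subG] by (intro rev_image_eqI[of "scaleC c x'"]) simp_all
qed

end

lemma main_dense:
  fixes SG :: "'h0::chilbert set" and G :: "'h0 \<Rightarrow> 'h1::chilbert"
    and SD :: "'h1 set" and D :: "'h1 \<Rightarrow> 'h0"
    and a :: "'h1 \<Rightarrow> 'h1" and as :: "nat \<Rightarrow> 'h1 \<Rightarrow> 'h1" and \<mu> :: real
  assumes dG: "dd_closed_op SG G"
    and dD: "dd_closed_op SD D"
    and na: "neg_adj_subset SG G SD D"
    and ce: "compact_embedding SG G"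
    and ba: "bounded_clinear_op a" and bas: "\<And>n. bounded_clinear_op (as n)"
    and mu: "\<mu> > 0"
    and cas: "\<And>n. re_ge (as n) \<mu>" and ca: "re_ge a \<mu>"
    and cib: "conv_indep_bc SG G SD D as a"
    and xR: "x \<in> G ` SG" and xA: "x \<in> adj_dom SG G" and yR: "y \<in> G ` SG"
  shows "(\<lambda>n. cinner (compressed_inv (G ` SG) (as n) x) y) \<longlonglongrightarrow> cinner (compressed_inv (G ` SG) a x) y"
proof -
  interpret closed_dd SG G by (unfold_locales) (rule dG)
  define R where "R = G ` SG"
  have subR': "csubspace R" unfolding R_def by (rule subR)
  have clR: "closed R" unfolding R_def by (rule closed_range_and_bound(1)[OF ce])
  obtain C where C: "C > 0" "\<And>y. y \<in> R \<Longrightarrow> \<exists>u\<in>SG. G u = y \<and> norm u \<le> C * norm y"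
    using closed_range_and_bound(2)[OF ce] unfolding R_def by blast
  interpret CA: compression R a \<mu> by unfold_locales (use subR' clR ba mu ca in auto)
  have CAS: "compression R (as n) \<mu>" for n by unfold_locales (use subR' clR bas mu cas in auto)
  define Tn where "Tn n = compressed_inv R (as n)" for n
  have xR': "x \<in> R" using xR by (simp add: R_def)
  have yR': "y \<in> R" using yR by (simp add: R_def)
  have TnR: "Tn n x \<in> R" for n using compression.T_R[OF CAS xR'] by (simp add: Tn_def compression.T_def[OF CAS])
  have Tnb: "\<mu> * norm (Tn n x) \<le> norm x" for n
    using compression.T_bound[OF CAS xR'] by (simp add: Tn_def compression.T_def[OF CAS])
  have Tno: "cinner (as n (Tn n x) - x) rr = 0" if "rr \<in> R" for n rr
    using compression.T_orth[OF CAS xR' that] by (simp add: Tn_def compression.T_def[OF CAS])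
  have subD: "csubspace SD" and linD: "clinear_on SD D" using dD by (auto simp: dd_closed_op_def)
  have adjD: "v \<in> SD \<and> D v = - adj SG G v" if "v \<in> adj_dom SG G" for v
    using na that unfolding neg_adj_subset_def by blast
  have Dval: "as n (Tn n x) \<in> SD \<and> - D (as n (Tn n x)) = - D x" for n
  proof -
    define wn where "wn = as n (Tn n x) - x"
    have "\<forall>u\<in>SG. cinner (G u) wn = 0"
    proof
      fix u assume "u \<in> SG"
      hence "G u \<in> R" by (simp add: R_def)
      from Tno[OF this, of n] show "cinner (G u) wn = 0" unfolding wn_def by (rule cinner_orth_sym)
    qed
    from adj_orth[OF this] have "wn \<in> SD" "D wn = 0" using adjD by auto
    moreover have "x \<in> SD" using adjD[OF xA] by blast
    moreover have "D (x + wn) = D x + D wn" using linD calculation unfolding clinear_on_def by blast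
    moreover have "as n (Tn n x) = x + wn" by (simp add: wn_def)
    ultimately show ?thesis using csub_add[OF subD] by simp
  qed
  define L where "L = cinner (CA.T x) y"
  show ?thesis
    unfolding R_def[symmetric] Tn_def[symmetric] CA.T_def[symmetric] L_def[symmetric]
  proof (rule subseq_principle)
    fix r :: "nat \<Rightarrow> nat" assume r: "strict_mono r"
    have "\<forall>k. \<exists>u. u \<in> SG \<and> G u = Tn (r k) x \<and> norm u \<le> C * norm (Tn (r k) x)"
      using C(2)[OF TnR] by blast
    from choice[OF this] obtain us where us: "\<forall>k. us k \<in> SG \<and> G (us k) = Tn (r k) x \<and> norm (us k) \<le> C * norm (Tn (r k) x)"
      by blast
    define p where "p k = (us k, G (us k))" for k
    have Tnb': "norm (Tn n x) \<le> norm x / \<mu>" for n using Tnb[of n] mu by (simp add: field_simps)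
    have pb: "norm (p k) \<le> C * (norm x / \<mu>) + norm x / \<mu>" for k
    proof -
      have "norm (p k) \<le> norm (us k) + norm (G (us k))" unfolding p_def by (rule norm_Pair_le)
      also have "\<dots> \<le> C * norm (Tn (r k) x) + norm (Tn (r k) x)" using us by simp
      also have "\<dots> \<le> C * (norm x / \<mu>) + norm x / \<mu>"
        using Tnb'[of "r k"] C(1) by (intro add_mono mult_left_mono) auto
      finally show ?thesis .
    qed
    obtain r' w where r': "strict_mono r'" and wc: "weak_conv (p \<circ> r') w"
      using weak_compact[of p, OF pb] by blast
    have pGam: "(p \<circ> r') k \<in> Gam" for k using us by (auto simp: p_def Gam_def)
    have "w \<in> Gam" by (rule weak_limit_in_closed_sub[OF Gam_sub clG[folded Gam_def] pGam wc])
    then obtain u where u: "u \<in> SG" "w = (u, G u)" by (auto simp: Gam_def)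
    define nn where "nn = r \<circ> r'"
    have nn: "strict_mono nn" unfolding nn_def using r r' by (rule strict_mono_o)
    define uk where "uk = us \<circ> r'"
    have ukS: "uk k \<in> SG" for k using us by (simp add: uk_def)
    have Guk: "G (uk k) = Tn (nn k) x" for k using us by (simp add: uk_def nn_def)
    have wcg: "weak_conv_graph SG G uk u"
      unfolding weak_conv_graph_def
    proof (intro conjI allI ballI)
      show "uk k \<in> SG" for k by (rule ukS)
      show "u \<in> SG" by (rule u(1))
      fix v assume "v \<in> SG"
      have "(\<lambda>k. cinner ((p \<circ> r') k) (v, G v)) \<longlonglongrightarrow> cinner w (v, G v)" using wc by (simp add: weak_conv_def)
      thus "(\<lambda>k. graph_inner G (uk k) v) \<longlonglongrightarrow> graph_inner G u v"
        by (simp add: graph_inner_def cinner_prod p_def uk_def u(2))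
    qed
    have hyp: "\<forall>k. as (nn k) (G (uk k)) \<in> SD \<and> - D (as (nn k) (G (uk k))) = (\<lambda>k. - D x) k"
      using Dval by (simp add: Guk)
    have wf: "weak_conv (\<lambda>k::nat. - D x) (- D x)" by (simp add: weak_conv_def)
    have wlim: "weak_conv (\<lambda>k. as (nn k) (G (uk k))) (a (G u))"
      by (rule cib[unfolded conv_indep_bc_def, rule_format, OF nn wf wcg hyp[rule_format]])
    have GuR: "G u \<in> R" using u(1) by (simp add: R_def)
    have "\<forall>rr\<in>R. cinner (a (G u) - x) rr = 0"
    proof
      fix rr assume rr: "rr \<in> R"
      have t1: "(\<lambda>k. cinner (as (nn k) (G (uk k))) rr) \<longlonglongrightarrow> cinner (a (G u)) rr"
        using wlim by (simp add: weak_conv_def)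
      have "cinner (as (nn k) (G (uk k))) rr = cinner x rr" for k
        using Tno[OF rr, of "nn k"] by (simp add: Guk cinner_diff_left)
      hence "(\<lambda>k. cinner x rr) \<longlonglongrightarrow> cinner (a (G u)) rr" using t1 by simp
      hence "cinner x rr = cinner (a (G u)) rr" by (simp add: LIMSEQ_const_iff)
      thus "cinner (a (G u) - x) rr = 0" by (simp add: cinner_diff_left)
    qed
    hence TxGu: "CA.T x = G u" by (rule CA.T_char[OF GuR xR', rotated])
    have "(\<lambda>k. cinner ((p \<circ> r') k) (0, y)) \<longlonglongrightarrow> cinner w (0, y)" using wc by (simp add: weak_conv_def)
    hence "(\<lambda>k. cinner (Tn (r (r' k)) x) y) \<longlonglongrightarrow> cinner (CA.T x) y"
      using us by (simp add: cinner_prod p_def u(2) TxGu)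
    thus "\<exists>r'::nat\<Rightarrow>nat. strict_mono r' \<and> (\<lambda>k. cinner (Tn (r (r' k)) x) y) \<longlonglongrightarrow> L"
      using r' unfolding L_def by blast
  qed
qed

lemma (in compression) T_cont:
  assumes x: "x \<in> R" and x': "x' \<in> R" and d: "norm (x - x') \<le> \<delta>"
  shows "cmod (cinner (T x) y - cinner (T x') y) \<le> \<delta> / \<mu> * norm y"
proof -
  have xx: "x - x' \<in> R" using x x' by (rule csub_diff[OF sub])
  have "cinner (T x) y - cinner (T x') y = cinner (T (x - x')) y"
    by (simp add: T_diff[OF x x'] cinner_diff_left)
  hence "cmod (cinner (T x) y - cinner (T x') y) \<le> norm (T (x - x')) * norm y"
    using Cauchy_Schwarz by simp
  also have "norm (T (x - x')) \<le> \<delta> / \<mu>"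
    using T_bound[OF xx] d mu by (simp add: field_simps)
  hence "norm (T (x - x')) * norm y \<le> \<delta> / \<mu> * norm y" by (intro mult_right_mono) simp_all
  finally show ?thesis .
qed

theorem proposition6p2:
  fixes SG :: "'h0::chilbert set" and G :: "'h0 \<Rightarrow> 'h1::chilbert"
    and SD :: "'h1 set" and D :: "'h1 \<Rightarrow> 'h0"
    and a :: "'h1 \<Rightarrow> 'h1" and as :: "nat \<Rightarrow> 'h1 \<Rightarrow> 'h1" and \<mu> :: real
  assumes "dd_closed_op SG G"
    and "dd_closed_op SD D"
    and "neg_adj_subset SG G SD D"
    and "compact_embedding SG G"
    and "bounded_clinear_op a" and "\<And>n. bounded_clinear_op (as n)"
    and "\<mu> > 0"
    and "\<And>n. re_ge (as n) \<mu>" and "re_ge a \<mu>"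
    and "conv_indep_bc SG G SD D as a"
  shows "wot_conv_on (G ` SG) (\<lambda>n. compressed_inv (G ` SG) (as n)) (compressed_inv (G ` SG) a)"
proof -
  note A = assms
  interpret closed_dd SG G by (unfold_locales) (rule A(1))
  define R where "R = G ` SG"
  have subR': "csubspace R" unfolding R_def by (rule subR)
  have clR: "closed R" unfolding R_def by (rule closed_range_and_bound(1)[OF A(4)])
  interpret CA: compression R a \<mu> by unfold_locales (use subR' clR A(5,7,9) in auto)
  have CAS: "compression R (as n) \<mu>" for n by unfold_locales (use subR' clR A(6,7,8) in auto)
  show ?thesis
    unfolding wot_conv_on_def R_def[symmetric]
  proof (intro ballI)
    fix x y assume xR: "x \<in> R" and yR: "y \<in> R"
    show "(\<lambda>n. cinner (compressed_inv R (as n) x) y) \<longlonglongrightarrow> cinner (compressed_inv R a x) y"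
    proof (rule LIMSEQ_I)
      fix e :: real assume e: "e > 0"
      define \<delta> where "\<delta> = e * \<mu> / (3 * (norm y + 1))"
      have ny: "norm y + 1 > 0" by (simp add: add_nonneg_pos)
      have dpos: "\<delta> > 0" unfolding \<delta>_def using e A(7) ny by simp
      have dbound: "\<delta> / \<mu> * norm y \<le> e / 3"
      proof -
        have h: "3 * \<delta> * (norm y + 1) = e * \<mu>" unfolding \<delta>_def using ny by (simp add: field_simps)
        have "3 * \<delta> * norm y \<le> 3 * \<delta> * (norm y + 1)" using dpos by simp
        hence "3 * \<delta> * norm y \<le> e * \<mu>" using h by simp
        thus ?thesis using A(7) by (simp add: field_simps)
      qed
      obtain x' where x': "x' \<in> G ` SG \<inter> adj_dom SG G" "norm (x - x') < \<delta>"
        using density[OF A(4) xR[unfolded R_def] dpos] by blast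
      have x'R: "x' \<in> R" using x' by (simp add: R_def)
      have conv: "(\<lambda>n. cinner (compressed_inv R (as n) x') y) \<longlonglongrightarrow> cinner (compressed_inv R a x') y"
        using main_dense[OF A x'(1)[THEN IntD1] x'(1)[THEN IntD2] yR[unfolded R_def]] by (simp add: R_def)
      have "e / 3 > 0" using e by simp
      from LIMSEQ_D[OF conv this] obtain no where
        no: "\<And>n. n \<ge> no \<Longrightarrow> norm (cinner (compressed_inv R (as n) x') y - cinner (compressed_inv R a x') y) < e / 3"
        by blast
      show "\<exists>no. \<forall>n\<ge>no. norm (cinner (compressed_inv R (as n) x) y - cinner (compressed_inv R a x) y) < e"
      proof (intro exI allI impI)
        fix n assume n: "n \<ge> no"
        have d: "norm (x - x') \<le> \<delta>" using x'(2) by simp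
        have t1: "cmod (cinner (compressed_inv R (as n) x) y - cinner (compressed_inv R (as n) x') y) \<le> e / 3"
          using compression.T_cont[OF CAS[of n] xR x'R d, of y] dbound unfolding compression.T_def[OF CAS[of n]] by linarith
        have t3: "cmod (cinner (compressed_inv R a x) y - cinner (compressed_inv R a x') y) \<le> e / 3"
          using CA.T_cont[OF xR x'R d, of y] dbound unfolding CA.T_def by linarith
        have "norm (cinner (compressed_inv R (as n) x) y - cinner (compressed_inv R a x) y) \<le>
          cmod (cinner (compressed_inv R (as n) x) y - cinner (compressed_inv R (as n) x') y) +
          norm (cinner (compressed_inv R (as n) x') y - cinner (compressed_inv R a x') y) +
          cmod (cinner (compressed_inv R a x) y - cinner (compressed_inv R a x') y)"
          by (rule tri3)
        also have "\<dots> < e / 3 + e / 3 + e / 3" using t1 t3 no[OF n] by linarith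
        finally show "norm (cinner (compressed_inv R (as n) x) y - cinner (compressed_inv R a x) y) < e" by simp
      qed
    qed
  qed
qed

end
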